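(* For any integer $n>1$, and for any 0-cell $\{\lambda_{i,j}:s_js_i \to s_is_j\}_{0\leq i< j \leq n}$ of $\mathsf{Wdl}^{(n)}(\overline{\mathcal K})$, consider the idempotent 2-cell $$ \overleftarrow{\lambda}_{0,1,\dots,n}:= s_0s_1\dots s_{n-1}\mu_n \,.\, (\text{the unique composite of } \lambda_{i,j}\text{s } s_ns_0s_1\dots s_n\to s_0s_1\dots s_{n-1}s_n^2) \,.\, \eta_ns_0s_1\dots s_n : s_0s_1\dots s_n\to s_0s_1\dots s_n $$ in $\mathcal K$ and $$ \overline\lambda_{01\dots n}:= \overleftarrow \lambda_{0,1,\dots,n}. \overleftarrow \lambda_{0,1,\dots,n-1}s_n.\ \cdots\ . \overleftarrow \lambda_{0,1,2}s_3s_4\dots s_n. \overline \lambda_{01}s_2s_3\dots s_n\ . $$ This construction associates the same idempotent 2-cell to any 0-cell $\{\lambda_{i,j}:s_js_i \to s_is_j\}_{0\leq i< j \leq n}$ of $\mathsf{Wdl}^{(n)}(\overline{\mathcal K})$ and to its image under any of the 2-functors $C_k:\mathsf{Wdl}^{(n)}(\overline{\mathcal K})\to \mathsf{Wdl}^{(n-1)}(\overline{\mathcal K})$, $1\leq k\leq n$. That is, for all $1\leq k\leq n$, $\overline\lambda_{01\dots n}= \overline\lambda_{01\dots k-2(k-1,k)k+1\dots n}$, where the right hand side is the same construction applied to the $n$ monads $s_0,\dots,s_{k-2},(s_{k-1}s_k,\overline\lambda_{k-1,k}),s_{k+1},\dots,s_n$ and the weak distributive laws of the image under $C_k$.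
   Context: $\mathcal K$ is a 2-category and $\overline{\mathcal K}$ its local idempotent closure: same 0-cells, 1-cells are pairs $(v,\overline v)$ with $\overline v:v\to v$ an idempotent 2-cell of $\mathcal K$, and 2-cells $(v,\overline v)\to(v',\overline{v'})$ are 2-cells $\omega:v\to v'$ with $\overline{v'}.\omega=\omega=\omega.\overline v$. A weak distributive law between monads $t,s$ on the same object is a 2-cell $\lambda:ts\to st$ compatible with both multiplications and satisfying the weak unit condition $s\mu.\lambda t.\eta st=\mu t.s\lambda.st\eta=:\overline\lambda$ (an idempotent; $\overline\lambda_{ij}$ denotes this idempotent for $\lambda_{i,j}$). A 0-cell of $\mathsf{Wdl}^{(n)}(\overline{\mathcal K})$ is a family of $n+1$ monads $s_0,\dots,s_n$ in $\overline{\mathcal K}$ on a common object, with multiplications $\mu_i$ and units $\eta_i$, together with weak distributive laws $\lambda_{i,j}:s_js_i\to s_is_j$ for $0\le i<j\le n$ satisfying the Yang-Baxter relation $\lambda_{i,j}s_k.s_j\lambda_{i,k}.\lambda_{j,k}s_i=s_i\lambda_{j,k}.\lambda_{i,k}s_j.s_k\lambda_{i,j}$ for $i<j<k$. The 2-functor $C_k$ sends such a 0-cell to the $n$ monads $s_0,\dots,s_{k-2},(s_{k-1}s_k,\overline\lambda_{k-1,k}),s_{k+1},\dots,s_n$ (the middle one being the weak wreath product monad with multiplication $\mu_{k-1}\mu_k.s_{k-1}\lambda_{k-1,k}s_k$ and unit $\lambda_{k-1,k}.\eta_k\eta_{k-1}$) with weak distributive laws: $\lambda_{i,j}$ if $i,j\notin\{k-1,k\}$;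 $s_{k-1}\lambda_{k,j}.\lambda_{k-1,j}s_k.s_j\overline\lambda_{k-1,k}:s_j(s_{k-1}s_k)\to(s_{k-1}s_k)s_j$ if $k<j$; and $\lambda_{i,k-1}s_k.s_{k-1}\lambda_{i,k}.\overline\lambda_{k-1,k}s_i:(s_{k-1}s_k)s_i\to s_i(s_{k-1}s_k)$ if $i<k-1$. *)

theory Defs
  imports Main
begin

text \<open>
  All monads in the statement live on one common 0-cell A of the 2-category K, so
  everything happens in the hom-category K(A,A), which is a strict monoidal category
  (horizontal composition = tensor).  Conversely every strict monoidal category is
  K(A,A) for a one-object 2-category.  We therefore model the relevant part of K as a
  strict monoidal category: 1-cells of type 'o, 2-cells of type 'm.
\<close>

record ('o,'m) smcat =
  cdom  :: "'m \<Rightarrow> 'o"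
  ccod  :: "'m \<Rightarrow> 'o"
  cid   :: "'o \<Rightarrow> 'm"
  ccomp :: "'m \<Rightarrow> 'm \<Rightarrow> 'm"   (* vertical composition, ccomp f g = f . g (g first) *)
  otens :: "'o \<Rightarrow> 'o \<Rightarrow> 'o"
  mtens :: "'m \<Rightarrow> 'm \<Rightarrow> 'm"
  cunit :: "'o"

locale smc_ops =
  fixes C :: "('o,'m) smcat"
begin

abbreviation Dom where "Dom \<equiv> cdom C"
abbreviation Cod where "Cod \<equiv> ccod C"
abbreviation Id where "Id \<equiv> cid C"
abbreviation V where "V \<equiv> ccomp C"
abbreviation OT where "OT \<equiv> otens C"
abbreviation H where "H \<equiv> mtens C"
abbreviation U where "U \<equiv> cunit C"

definition hom :: "'m \<Rightarrow> 'o \<Rightarrow> 'o \<Rightarrow> bool" where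
  "hom f a b \<longleftrightarrow> Dom f = a \<and> Cod f = b"

definition ob :: "'o list \<Rightarrow> 'o" where
  "ob xs = foldr OT xs U"

definition idl :: "'o list \<Rightarrow> 'm" where
  "idl xs = Id (ob xs)"

text \<open>A monad in the local idempotent closure: 1-cell (s, sb), multiplication mu, unit eta.
  Identity 2-cell of (s,sb) is sb; whiskering by (s,sb) is horizontal composition with sb.\<close>
definition is_monad :: "'o \<Rightarrow> 'm \<Rightarrow> 'm \<Rightarrow> 'm \<Rightarrow> bool" where
  "is_monad s sb mu eta \<longleftrightarrow>
     hom sb s s \<and> V sb sb = sb \<and>
     hom mu (OT s s) s \<and> V sb mu = mu \<and> V mu (H sb sb) = mu \<and>
     hom eta U s \<and> V sb eta = eta \<and>
     V mu (H mu sb) = V mu (H sb mu) \<and>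
     V mu (H eta sb) = sb \<and> V mu (H sb eta) = sb"

text \<open>A weak distributive law lam : t s \<rightarrow> s t in the local idempotent closure between monads
  t = (st, sbt, mut, etat) and s = (ss, sbs, mus, etas).\<close>
definition is_wdl :: "'o \<Rightarrow> 'm \<Rightarrow> 'm \<Rightarrow> 'm \<Rightarrow> 'o \<Rightarrow> 'm \<Rightarrow> 'm \<Rightarrow> 'm \<Rightarrow> 'm \<Rightarrow> bool" where
  "is_wdl st sbt mut etat ss sbs mus etas lam \<longleftrightarrow>
     hom lam (OT st ss) (OT ss st) \<and>
     V (H sbs sbt) lam = lam \<and> V lam (H sbt sbs) = lam \<and>
     V lam (H mut sbs) = V (H sbs mut) (V (H lam sbt) (H sbt lam)) \<and>
     V lam (H sbt mus) = V (H mus sbt) (V (H sbs lam) (H lam sbs)) \<and>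
     V (H sbs mut) (V (H lam sbt) (H etat (H sbs sbt))) =
     V (H mus sbt) (V (H sbs lam) (H sbs (H sbt etas)))"

definition wdl0 :: "nat \<Rightarrow> (nat \<Rightarrow> 'o) \<Rightarrow> (nat \<Rightarrow> 'm) \<Rightarrow> (nat \<Rightarrow> 'm) \<Rightarrow> (nat \<Rightarrow> 'm)
                   \<Rightarrow> (nat \<Rightarrow> nat \<Rightarrow> 'm) \<Rightarrow> bool" where
  "wdl0 n S Sb M E L \<longleftrightarrow>
     (\<forall>i\<le>n. is_monad (S i) (Sb i) (M i) (E i)) \<and>
     (\<forall>i j. i < j \<and> j \<le> n \<longrightarrow>
        is_wdl (S j) (Sb j) (M j) (E j) (S i) (Sb i) (M i) (E i) (L i j)) \<and>
     (\<forall>i j k. i < j \<and> j < k \<and> k \<le> n \<longrightarrow>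
        V (H (L i j) (Sb k)) (V (H (Sb j) (L i k)) (H (L j k) (Sb i))) =
        V (H (Sb i) (L j k)) (V (H (L i k) (Sb j)) (H (Sb k) (L i j))))"

definition wu :: "(nat \<Rightarrow> 'o) \<Rightarrow> (nat \<Rightarrow> 'm) \<Rightarrow> (nat \<Rightarrow> 'm) \<Rightarrow> (nat \<Rightarrow> nat \<Rightarrow> 'm)
                   \<Rightarrow> nat \<Rightarrow> nat \<Rightarrow> 'm" where
  "wu S M E L i j = V (H (Id (S i)) (M j)) (V (H (L i j) (Id (S j))) (H (E j) (H (Id (S i)) (Id (S j)))))"

text \<open>The composite of the L i m moving S m past S 0 ... S (m-1):
  after i steps, S m S_0..S_{m-1} \<rightarrow> S_0..S_{i-1} S_m S_i..S_{m-1}.\<close>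
definition mvstep :: "(nat \<Rightarrow> 'o) \<Rightarrow> (nat \<Rightarrow> nat \<Rightarrow> 'm) \<Rightarrow> nat \<Rightarrow> nat \<Rightarrow> 'm" where
  "mvstep S L m i = H (idl (map S [0..<i])) (H (L i m) (idl (map S [Suc i..<m])))"

fun mv :: "(nat \<Rightarrow> 'o) \<Rightarrow> (nat \<Rightarrow> nat \<Rightarrow> 'm) \<Rightarrow> nat \<Rightarrow> nat \<Rightarrow> 'm" where
  "mv S L m 0 = idl (S m # map S [0..<m])"
| "mv S L m (Suc i) = V (mvstep S L m i) (mv S L m i)"

definition larrow :: "(nat \<Rightarrow> 'o) \<Rightarrow> (nat \<Rightarrow> 'm) \<Rightarrow> (nat \<Rightarrow> 'm) \<Rightarrow> (nat \<Rightarrow> nat \<Rightarrow> 'm)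
                       \<Rightarrow> nat \<Rightarrow> 'm" where
  "larrow S M E L m =
     V (H (idl (map S [0..<m])) (M m))
       (V (H (mv S L m m) (Id (S m)))
          (H (E m) (idl (map S [0..<Suc m]))))"

text \<open>lambda-bar_{01...m} = larrow_{0..m} . larrow_{0..m-1} S_m . ... . larrow_{0,1} S_2..S_m
  (note larrow_{0,1} is the weak unit idempotent of L 0 1).\<close>
fun wbar :: "(nat \<Rightarrow> 'o) \<Rightarrow> (nat \<Rightarrow> 'm) \<Rightarrow> (nat \<Rightarrow> 'm) \<Rightarrow> (nat \<Rightarrow> nat \<Rightarrow> 'm) \<Rightarrow> nat \<Rightarrow> 'm" where
  "wbar S M E L 0 = Id (S 0)"
| "wbar S M E L (Suc m) = V (larrow S M E L (Suc m)) (H (wbar S M E L m) (Id (S (Suc m))))"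

text \<open>Image under the 2-functor C_k (1 \<le> k \<le> n): merge monads k-1 and k.\<close>
definition CS :: "nat \<Rightarrow> (nat \<Rightarrow> 'o) \<Rightarrow> nat \<Rightarrow> 'o" where
  "CS k S i = (if i < k - 1 then S i else if i = k - 1 then OT (S (k - 1)) (S k) else S (Suc i))"

definition CM :: "nat \<Rightarrow> (nat \<Rightarrow> 'o) \<Rightarrow> (nat \<Rightarrow> 'm) \<Rightarrow> (nat \<Rightarrow> nat \<Rightarrow> 'm) \<Rightarrow> nat \<Rightarrow> 'm" where
  "CM k S M L i = (if i < k - 1 then M i
      else if i = k - 1 then V (H (M (k - 1)) (M k)) (H (Id (S (k - 1))) (H (L (k - 1) k) (Id (S k))))
      else M (Suc i))"

definition CE :: "nat \<Rightarrow> (nat \<Rightarrow> 'm) \<Rightarrow> (nat \<Rightarrow> nat \<Rightarrow> 'm) \<Rightarrow> nat \<Rightarrow> 'm" where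
  "CE k E L i = (if i < k - 1 then E i
      else if i = k - 1 then V (L (k - 1) k) (H (E k) (E (k - 1)))
      else E (Suc i))"

definition CL :: "nat \<Rightarrow> (nat \<Rightarrow> 'o) \<Rightarrow> (nat \<Rightarrow> 'm) \<Rightarrow> (nat \<Rightarrow> 'm) \<Rightarrow> (nat \<Rightarrow> nat \<Rightarrow> 'm)
                   \<Rightarrow> nat \<Rightarrow> nat \<Rightarrow> 'm" where
  "CL k S M E L i j =
     (if j < k - 1 then L i j
      else if j = k - 1 then
        V (H (L i (k - 1)) (Id (S k)))
          (V (H (Id (S (k - 1))) (L i k)) (H (wu S M E L (k - 1) k) (Id (S i))))
      else if i < k - 1 then L i (Suc j)
      else if i = k - 1 then
        V (H (Id (S (k - 1))) (L k (Suc j)))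
          (V (H (L (k - 1) (Suc j)) (Id (S k))) (H (Id (S (Suc j))) (wu S M E L (k - 1) k)))
      else L (Suc i) (Suc j))"

end

locale smc = smc_ops +
  assumes dom_id: "Dom (Id a) = a" and cod_id: "Cod (Id a) = a"
    and dom_comp: "Cod g = Dom f \<Longrightarrow> Dom (V f g) = Dom g"
    and cod_comp: "Cod g = Dom f \<Longrightarrow> Cod (V f g) = Cod f"
    and comp_id_right: "V f (Id (Dom f)) = f"
    and comp_id_left: "V (Id (Cod f)) f = f"
    and comp_assoc: "Cod h = Dom g \<Longrightarrow> Cod g = Dom f \<Longrightarrow> V (V f g) h = V f (V g h)"
    and dom_tens: "Dom (H f g) = OT (Dom f) (Dom g)"
    and cod_tens: "Cod (H f g) = OT (Cod f) (Cod g)"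
    and tens_id: "H (Id a) (Id b) = Id (OT a b)"
    and interchange: "Cod g = Dom f \<Longrightarrow> Cod k = Dom h \<Longrightarrow> H (V f g) (V h k) = V (H f h) (H g k)"
    and otens_assoc: "OT (OT a b) c = OT a (OT b c)"
    and otens_unit_left: "OT U a = a" and otens_unit_right: "OT a U = a"
    and mtens_assoc: "H (H f g) h = H f (H g h)"
    and mtens_unit_left: "H (Id U) f = f" and mtens_unit_right: "H f (Id U) = f"

end

theory Submission
  imports Defs
begin


context smc begin

lemma obs[simp]: "ob [] = U" "ob (x # xs) = OT x (ob xs)" "ob (xs @ ys) = OT (ob xs) (ob ys)"
  by (simp_all add: ob_def otens_unit_left otens_assoc)
    (induct xs, simp_all add: otens_unit_left otens_assoc)

lemma comp_idr[simp]: "Dom f = a \<Longrightarrow> V f (Id a) = f" using comp_id_right by blast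
lemma comp_idl[simp]: "Cod f = a \<Longrightarrow> V (Id a) f = f" using comp_id_left by blast

definition w where "w A f B = H (Id A) (H f (Id B))"

lemma w_dom[simp]: "Dom (w A f B) = OT A (OT (Dom f) B)" and w_cod[simp]: "Cod (w A f B) = OT A (OT (Cod f) B)"
  by (simp_all add: w_def dom_tens cod_tens dom_id cod_id)

lemma w_UU[simp]: "w U f U = f" by (simp add: w_def mtens_unit_left mtens_unit_right)

lemma w_nest[simp]: "w A (w A' f B') B = w (OT A A') f (OT B' B)"
  by (simp add: w_def mtens_assoc tens_id[symmetric])

lemma w_Id[simp]: "w A (Id X) B = Id (OT A (OT X B))" by (simp add: w_def tens_id)

lemma HId[simp]: "H (Id A) f = w A f U" "H f (Id B) = w U f B"
  by (simp_all add: w_def mtens_unit_right mtens_unit_left)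

lemma w_V: "Cod g = Dom f \<Longrightarrow> V (w A f B) (w A g B) = w A (V f g) B"
  unfolding w_def by (simp del: HId add: interchange[symmetric] dom_id cod_id cod_tens dom_tens)


lemmas smc_simps[simp] = dom_id cod_id dom_tens cod_tens otens_assoc otens_unit_left
  otens_unit_right dom_comp cod_comp comp_assoc idl_def

lemma w_Vt: "Cod g = Dom f \<Longrightarrow> Cod r = OT A (OT (Dom g) B) \<Longrightarrow> V (w A f B) (V (w A g B) r) = V (w A (V f g) B) r"
  by (simp add: w_V[symmetric])

lemma wH: "H f g = V (w U f (Cod g)) (w (Dom f) g U)"
  unfolding w_def using interchange[of "Id (Dom f)" f g "Id (Cod g)"]
  by (simp del: HId add: comp_id_right comp_id_left dom_id cod_id mtens_unit_left mtens_unit_right)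
lemma wH2: "H f g = V (w (Cod f) g U) (w U f (Dom g))"
  unfolding w_def using interchange[of f "Id (Cod f)" "Id (Dom g)" g]
  by (simp del: HId add: comp_id_right comp_id_left dom_id cod_id mtens_unit_left mtens_unit_right)

lemma wc: "V (w A f (OT Y' D)) (w (OT A X) g D) = V (w (OT A X') g D) (w A f (OT Y D))"
  if "Dom f = X" "Cod f = X'" "Dom g = Y" "Cod g = Y'"
proof -
  have "V (w A f (OT Y' D)) (w (OT A X) g D) = w A (V (w U f Y') (w X g U)) D" 
    using that by (simp add: w_V[symmetric])
  also have "\<dots> = w A (V (w X' g U) (w U f Y)) D" using that wH[of f g] wH2[of f g] by simp
  also have "\<dots> = V (w (OT A X') g D) (w A f (OT Y D))" using that by (simp add: w_V[symmetric])
  finally show ?thesis .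
qed

lemma wct: "V (w A f (OT Y' D)) (V (w (OT A X) g D) r) = V (w (OT A X') g D) (V (w A f (OT Y D)) r)"
  if "Dom f = X" "Cod f = X'" "Dom g = Y" "Cod g = Y'" "Cod r = OT A (OT X (OT Y D))"
  using wc[OF that(1-4), of A D] that by (simp flip: comp_assoc)

lemma w_cong: "f = g \<Longrightarrow> w A f B = w A g B" by simp
lemma w_distr: "Cod g = Dom f \<Longrightarrow> w A (V f g) B = V (w A f B) (w A g B)" by (simp add: w_V)

lemma wcg: "V (w A f (OT Z (OT Y' D))) (w (OT A (OT X Z)) g D) = V (w (OT A (OT X' Z)) g D) (w A f (OT Z (OT Y D)))"
  if "Dom f = X" "Cod f = X'" "Dom g = Y" "Cod g = Y'"
  using wc[of "w U f Z" "OT X Z" "OT X' Z" g Y Y' A D] that by simp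

lemma gm: "V (w A f B) (w (OT A A') g (OT B'' B)) = w A (V f (w A' g B'')) B"
  if "Dom f = OT A' (OT (Cod g) B'')"
  using that w_V[of "w A' g B''" f A B] by simp
lemma gm2: "V (w (OT A A') g (OT B'' B)) (w A f B) = w A (V (w A' g B'') f) B"
  if "Cod f = OT A' (OT (Dom g) B'')"
  using that w_V[of f "w A' g B''" A B] by simp

lemma tl2: "V a b = c \<Longrightarrow> Cod b = Dom a \<Longrightarrow> Cod r = Dom b \<Longrightarrow> V a (V b r) = V c r"
  by (simp add: comp_assoc[symmetric])
lemma tl3: "V a (V b c) = d \<Longrightarrow> Cod b = Dom a \<Longrightarrow> Cod c = Dom b \<Longrightarrow> Cod r = Dom c \<Longrightarrow> V a (V b (V c r)) = V d r"
proof -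
  assume a: "V a (V b c) = d" "Cod b = Dom a" "Cod c = Dom b" "Cod r = Dom c"
  have "V a (V b (V c r)) = V a (V (V b c) r)" using a(2-4) by simp
  also have "\<dots> = V (V a (V b c)) r" using a(2-4) by simp
  also have "\<dots> = V d r" by (simp only: a(1))
  finally show ?thesis .
qed

lemma wU_H: "w U f D = H f (Id D)" "w D f U = H (Id D) f"
  by (simp_all del: HId add: w_def mtens_unit_left mtens_unit_right)

lemma xchV: "Cod h = Dom f \<Longrightarrow> Cod k = Dom g \<Longrightarrow> V (H f g) (H h k) = H (V f h) (V g k)"
  using interchange by simp

lemma absorb_gen: assumes "V l (H p q) = l" "V p p = p" "V q q = q" "Dom p = Cod p" "Dom q = Cod q"
  "Dom l = OT (Cod p) (Cod q)"
  shows "V l (w U p (Dom q)) = l" "V l (w (Dom p) q U) = l"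
proof -
  have "V l (w U p (Dom q)) = V (V l (H p q)) (H p (Id (Dom q)))"
    by (simp only: assms(1) wU_H)
  also have "\<dots> = V l (H p q)" using assms(2-6) by (simp del: HId add: xchV)
  finally show "V l (w U p (Dom q)) = l" using assms(1) by simp
  have "V l (w (Dom p) q U) = V (V l (H p q)) (H (Id (Dom p)) q)"
    by (simp only: assms(1) wU_H)
  also have "\<dots> = V l (H p q)" using assms(2-6) by (simp del: HId add: xchV)
  finally show "V l (w (Dom p) q U) = l" using assms(1) by simp
qed

lemma absorb_genL: assumes "V (H p q) l = l" "V p p = p" "V q q = q" "Dom p = Cod p" "Dom q = Cod q"
  "Cod l = OT (Dom p) (Dom q)"
  shows "V (w U p (Dom q)) l = l" "V (w (Dom p) q U) l = l"
proof -
  have "V (w U p (Dom q)) l = V (H p (Id (Dom q))) (V (H p q) l)"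
    by (simp only: assms(1) wU_H)
  also have "\<dots> = V (H p q) l" using assms(2-6) by (simp del: HId add: xchV flip: comp_assoc)
  finally show "V (w U p (Dom q)) l = l" using assms(1) by simp
  have "V (w (Dom p) q U) l = V (H (Id (Dom p)) q) (V (H p q) l)"
    by (simp only: assms(1) wU_H)
  also have "\<dots> = V (H p q) l" using assms(2-6) by (simp del: HId add: xchV flip: comp_assoc)
  finally show "V (w (Dom p) q U) l = l" using assms(1) by simp
qed

lemma gmt: "V (w A f B) (V (w (OT A A') g (OT B'' B)) r) = V (w A (V f (w A' g B'')) B) r"
  if "Dom f = OT A' (OT (Cod g) B'')" "Cod r = OT A (OT A' (OT (Dom g) (OT B'' B)))"
  using that w_V[of "w A' g B''" f A B] by (simp flip: comp_assoc)
lemma gm2t: "V (w (OT A A') g (OT B'' B)) (V (w A f B) r) = V (w A (V (w A' g B'') f) B) r"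
  if "Cod f = OT A' (OT (Dom g) B'')" "Cod r = Dom (w A f B)"
  using that w_V[of f "w A' g B''" A B] by (simp flip: comp_assoc)
lemma wcgt: "V (w A f (OT Z (OT Y' D))) (V (w (OT A (OT X Z)) g D) r) = V (w (OT A (OT X' Z)) g D) (V (w A f (OT Z (OT Y D))) r)"
  if "Dom f = X" "Cod f = X'" "Dom g = Y" "Cod g = Y'" "Cod r = OT A (OT X (OT Z (OT Y D)))"
  using wcg[of f X X' g Y Y' A Z D] that by (simp flip: comp_assoc)

end


locale wsys = smc C for C :: "('o,'m) smcat" +
  fixes n :: nat and S :: "nat \<Rightarrow> 'o" and Sb M E :: "nat \<Rightarrow> 'm" and L :: "nat \<Rightarrow> nat \<Rightarrow> 'm"
  assumes sys: "wdl0 n S Sb M E L"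
begin

lemma mon: "i \<le> n \<Longrightarrow> is_monad (S i) (Sb i) (M i) (E i)" using sys unfolding wdl0_def by blast
lemma wdl: "i < j \<Longrightarrow> j \<le> n \<Longrightarrow> is_wdl (S j) (Sb j) (M j) (E j) (S i) (Sb i) (M i) (E i) (L i j)"
  using sys unfolding wdl0_def by blast
lemma yb: "i < j \<Longrightarrow> j < k \<Longrightarrow> k \<le> n \<Longrightarrow>
        V (H (L i j) (Sb k)) (V (H (Sb j) (L i k)) (H (L j k) (Sb i))) =
        V (H (Sb i) (L j k)) (V (H (L i k) (Sb j)) (H (Sb k) (L i j)))"
  using sys unfolding wdl0_def by blast

lemma ty[simp]:
  "i \<le> n \<Longrightarrow> Dom (M i) = OT (S i) (S i)" "i \<le> n \<Longrightarrow> Cod (M i) = S i"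
  "i \<le> n \<Longrightarrow> Dom (E i) = U" "i \<le> n \<Longrightarrow> Cod (E i) = S i"
  "i \<le> n \<Longrightarrow> Dom (Sb i) = S i" "i \<le> n \<Longrightarrow> Cod (Sb i) = S i"
  "i < j \<Longrightarrow> j \<le> n \<Longrightarrow> Dom (L i j) = OT (S j) (S i)"
  "i < j \<Longrightarrow> j \<le> n \<Longrightarrow> Cod (L i j) = OT (S i) (S j)"
  using mon[of i] wdl[of i j] unfolding is_monad_def is_wdl_def hom_def by auto

lemma m_ax: assumes "i \<le> n" shows
  "V (Sb i) (Sb i) = Sb i" "V (Sb i) (M i) = M i" "V (M i) (H (Sb i) (Sb i)) = M i"
  "V (Sb i) (E i) = E i" "V (M i) (H (M i) (Sb i)) = V (M i) (H (Sb i) (M i))"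
  "V (M i) (H (E i) (Sb i)) = Sb i" "V (M i) (H (Sb i) (E i)) = Sb i"
  using mon[OF assms] unfolding is_monad_def by auto

lemma w_ax: assumes "i < j" "j \<le> n" shows
  "V (H (Sb i) (Sb j)) (L i j) = L i j" "V (L i j) (H (Sb j) (Sb i)) = L i j"
  "V (L i j) (H (M j) (Sb i)) = V (H (Sb i) (M j)) (V (H (L i j) (Sb j)) (H (Sb j) (L i j)))"
  "V (L i j) (H (Sb j) (M i)) = V (H (M i) (Sb j)) (V (H (Sb i) (L i j)) (H (L i j) (Sb i)))"
  "V (H (Sb i) (M j)) (V (H (L i j) (Sb j)) (H (E j) (H (Sb i) (Sb j)))) =
   V (H (M i) (Sb j)) (V (H (Sb i) (L i j)) (H (Sb i) (H (Sb j) (E i))))"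
  using wdl[OF assms] unfolding is_wdl_def by auto


lemma AL: assumes "i < j" "j \<le> n" shows
  "V (L i j) (w U (Sb j) (S i)) = L i j"
  "V (L i j) (w (S j) (Sb i) U) = L i j"
  "V (w U (Sb i) (S j)) (L i j) = L i j"
  "V (w (S i) (Sb j) U) (L i j) = L i j"
proof -
  have le: "i \<le> n" using assms by simp
  note ax = w_ax[OF assms]
  note mx = m_ax[OF le] m_ax[OF assms(2)]
  show "V (L i j) (w U (Sb j) (S i)) = L i j" "V (L i j) (w (S j) (Sb i) U) = L i j"
    using absorb_gen[of "L i j" "Sb j" "Sb i"] ax mx assms by simp_all
  show "V (w U (Sb i) (S j)) (L i j) = L i j" "V (w (S i) (Sb j) U) (L i j) = L i j"
    using absorb_genL[of "Sb i" "Sb j" "L i j"] ax mx assms by simp_all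
qed

lemma ALt: assumes "i < j" "j \<le> n" shows
  "Cod r = OT (S j) (S i) \<Longrightarrow> V (L i j) (V (w U (Sb j) (S i)) r) = V (L i j) r"
  "Cod r = OT (S j) (S i) \<Longrightarrow> V (L i j) (V (w (S j) (Sb i) U) r) = V (L i j) r"
  using tl2[OF AL(1)[OF assms]] tl2[OF AL(2)[OF assms]] assms by simp_all

lemma MA: assumes "i \<le> n" shows
  "V (M i) (w U (Sb i) (S i)) = M i" "V (M i) (w (S i) (Sb i) U) = M i"
  "V (M i) (w U (M i) (S i)) = V (M i) (w (S i) (M i) U)"
  "V (M i) (w U (E i) (S i)) = Sb i" "V (M i) (w (S i) (E i) U) = Sb i"
  "V (Sb i) (M i) = M i" "V (Sb i) (E i) = E i" "V (Sb i) (Sb i) = Sb i"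
proof -
  note mx = m_ax[OF assms]
  show 1: "V (M i) (w U (Sb i) (S i)) = M i" and 2: "V (M i) (w (S i) (Sb i) U) = M i"
    using absorb_gen[of "M i" "Sb i" "Sb i"] mx assms by simp_all
  have "V (M i) (w U (M i) (S i)) = V (V (M i) (w (S i) (Sb i) U)) (w U (M i) (S i))" by (simp only: 2)
  also have "\<dots> = V (M i) (H (M i) (Sb i))" using wH2[of "M i" "Sb i"] assms by simp
  also have "\<dots> = V (M i) (H (Sb i) (M i))" by (simp add: mx)
  also have "\<dots> = V (V (M i) (w U (Sb i) (S i))) (w (S i) (M i) U)" using wH[of "Sb i" "M i"] assms by simp
  finally show "V (M i) (w U (M i) (S i)) = V (M i) (w (S i) (M i) U)" by (simp only: 1)
  have "V (M i) (w U (E i) (S i)) = V (V (M i) (w (S i) (Sb i) U)) (w U (E i) (S i))" by (simp only: 2)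
  also have "\<dots> = V (M i) (H (E i) (Sb i))" using wH2[of "E i" "Sb i"] assms by simp
  finally show "V (M i) (w U (E i) (S i)) = Sb i" by (simp add: mx)
  have "V (M i) (w (S i) (E i) U) = V (V (M i) (w U (Sb i) (S i))) (w (S i) (E i) U)" by (simp only: 1)
  also have "\<dots> = V (M i) (H (Sb i) (E i))" using wH[of "Sb i" "E i"] assms by simp
  finally show "V (M i) (w (S i) (E i) U) = Sb i" by (simp add: mx)
qed (use m_ax[OF assms] in auto)

lemma LMj: assumes "i < j" "j \<le> n" shows
  "V (L i j) (w U (M j) (S i)) = V (w (S i) (M j) U) (V (w U (L i j) (S j)) (w (S j) (L i j) U))"
proof -
  have le: "i \<le> n" using assms by simp
  note ax = w_ax[OF assms] and al = AL[OF assms] and ma = MA[OF le] MA[OF assms(2)]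
  have "V (L i j) (w U (M j) (S i)) = V (V (L i j) (w (S j) (Sb i) U)) (w U (M j) (S i))"
    by (simp only: al)
  also have "\<dots> = V (L i j) (H (M j) (Sb i))" using wH2[of "M j" "Sb i"] assms by simp
  also have "\<dots> = V (H (Sb i) (M j)) (V (H (L i j) (Sb j)) (H (Sb j) (L i j)))" by (simp add: ax)
  also have "\<dots> = V (w (S i) (M j) U) (V (w U (Sb i) (OT (S j) (S j))) (V (w (OT (S i) (S j)) (Sb j) U)
     (V (w U (L i j) (S j)) (V (w U (Sb j) (OT (S i) (S j))) (w (S j) (L i j) U)))))"
    using wH2[of "Sb i" "M j"] wH2[of "L i j" "Sb j"] wH[of "Sb j" "L i j"] assms by simp
  also have "\<dots> = V (w (S i) (M j) U) (V (w (OT (S i) (S j)) (Sb j) U) (V (w U (Sb i) (OT (S j) (S j)))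
     (V (w U (L i j) (S j)) (V (w U (Sb j) (OT (S i) (S j))) (w (S j) (L i j) U)))))"
    using assms by (simp add: wcgt[where A=U and f="Sb i" and X="S i" and X'="S i" and Z="S j" and g="Sb j" 
       and Y="S j" and Y'="S j" and D=U, simplified])
  also have "\<dots> = V (w (S i) (M j) U) (V (w U (L i j) (S j)) (w (S j) (L i j) U))"
    using assms by (simp add: gmt[where A="S i" and f="M j" and A'="S j" and g="Sb j" and B''=U and B=U, simplified]
      gm2t[where A=U and A'=U and g="Sb i" and B''="S j" and B="S j" and f="L i j", simplified]
      gmt[where A=U and A'=U and g="Sb j" and B''="S i" and B="S j" and f="L i j", simplified] ma al)
  finally show ?thesis .
qed
lemma LMi: assumes "i < j" "j \<le> n" shows
  "V (L i j) (w (S j) (M i) U) = V (w U (M i) (S j)) (V (w (S i) (L i j) U) (w U (L i j) (S i)))"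
proof -
  have le: "i \<le> n" using assms by simp
  note ax = w_ax[OF assms] and al = AL[OF assms] and ma = MA[OF le] MA[OF assms(2)]
  have "V (L i j) (w (S j) (M i) U) = V (V (L i j) (w U (Sb j) (S i))) (w (S j) (M i) U)"
    by (simp only: al)
  also have "\<dots> = V (L i j) (H (Sb j) (M i))" using wH[of "Sb j" "M i"] assms by simp
  also have "\<dots> = V (H (M i) (Sb j)) (V (H (Sb i) (L i j)) (H (L i j) (Sb i)))" by (simp add: ax)
  also have "\<dots> = V (w U (M i) (S j)) (V (w (OT (S i) (S i)) (Sb j) U) (V (w U (Sb i) (OT (S i) (S j)))
     (V (w (S i) (L i j) U) (V (w (OT (S i) (S j)) (Sb i) U) (w U (L i j) (S i))))))"
    using wH[of "M i" "Sb j"] wH[of "Sb i" "L i j"] wH2[of "L i j" "Sb i"] assms by simp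
  also have "\<dots> = V (w U (M i) (S j)) (V (w U (Sb i) (OT (S i) (S j))) (V (w (OT (S i) (S i)) (Sb j) U)
     (V (w (S i) (L i j) U) (V (w (OT (S i) (S j)) (Sb i) U) (w U (L i j) (S i))))))"
    using assms by (simp add: wcgt[where A=U and f="Sb i" and X="S i" and X'="S i" and Z="S i" and g="Sb j" 
       and Y="S j" and Y'="S j" and D=U, simplified, symmetric])
  also have "\<dots> = V (w U (M i) (S j)) (V (w (S i) (L i j) U) (w U (L i j) (S i)))"
    using assms by (simp add: gmt[where A=U and f="M i" and A'=U and g="Sb i" and B''="S i" and B="S j", simplified]
      gm2t[where A="S i" and A'="S i" and g="Sb j" and B''=U and B=U and f="L i j", simplified]
      gmt[where A="S i" and A'="S j" and g="Sb i" and B''=U and B=U and f="L i j", simplified] ma al)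
  finally show ?thesis .
qed
lemma YB: assumes "i < j" "j < k" "k \<le> n" shows
  "V (w U (L i j) (S k)) (V (w (S j) (L i k) U) (w U (L j k) (S i))) =
   V (w (S i) (L j k) U) (V (w U (L i k) (S j)) (w (S k) (L i j) U))"
proof -
  have le: "i \<le> n" "j \<le> n" "i < k" using assms by simp_all
  note al = AL[of i j] AL[of i k] AL[of j k]
  have "V (w U (L i j) (S k)) (V (w (S j) (L i k) U) (w U (L j k) (S i))) = 
    V (w U (L i j) (S k)) (V (w U (Sb j) (OT (S i) (S k))) (V (w (OT (S j) (S i)) (Sb k) U) 
     (V (w (S j) (L i k) U) (V (w (OT (S j) (S k)) (Sb i) U) (w U (L j k) (S i))))))"
    using assms le by (simp add: gmt[where A=U and f="L i j" and A'=U and g="Sb j" and B''="S i" and B="S k", simplified]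
      gm2t[where A="S j" and A'="S i" and g="Sb k" and B''=U and B=U and f="L i k", simplified]
      gmt[where A="S j" and f="L i k" and A'="S k" and g="Sb i" and B''=U and B=U, simplified] al)
  also have "\<dots> = V (w (OT (S i) (S j)) (Sb k) U) (V (w U (L i j) (S k)) (V (w U (Sb j) (OT (S i) (S k)))  
     (V (w (S j) (L i k) U) (V (w (OT (S j) (S k)) (Sb i) U) (w U (L j k) (S i))))))"
    using assms le by (simp add: wcgt[where A=U and f="Sb j" and X="S j" and X'="S j" and Z="S i" and g="Sb k" 
       and Y="S k" and Y'="S k" and D=U, simplified, symmetric]
     wcgt[where A=U and f="L i j" and X="OT (S j) (S i)" and X'="OT (S i) (S j)" and Z=U and g="Sb k" 
       and Y="S k" and Y'="S k" and D=U, simplified, symmetric])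
  also have "\<dots> = V (H (L i j) (Sb k)) (V (H (Sb j) (L i k)) (H (L j k) (Sb i)))"
    using wH2[of "L i j" "Sb k"] wH[of "Sb j" "L i k"] wH2[of "L j k" "Sb i"] assms le by simp
  also have "\<dots> = V (H (Sb i) (L j k)) (V (H (L i k) (Sb j)) (H (Sb k) (L i j)))" using yb assms by simp
  also have "\<dots> = V (w U (Sb i) (OT (S j) (S k))) (V (w (S i) (L j k) U) (V (w (OT (S i) (S k)) (Sb j) U)
     (V (w U (L i k) (S j)) (V (w U (Sb k) (OT (S i) (S j))) (w (S k) (L i j) U)))))"
    using wH[of "Sb i" "L j k"] wH2[of "L i k" "Sb j"] wH[of "Sb k" "L i j"] assms le by simp
  also have "\<dots> = V (w (S i) (L j k) U) (V (w (OT (S i) (S k)) (Sb j) U) (V (w U (Sb i) (OT (S k) (S j)))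
     (V (w U (L i k) (S j)) (V (w U (Sb k) (OT (S i) (S j))) (w (S k) (L i j) U)))))"
    using assms le by (simp add: wcgt[where A=U and f="Sb i" and X="S i" and X'="S i" and Z="S k" and g="Sb j" 
       and Y="S j" and Y'="S j" and D=U, simplified]
     wcgt[where A=U and f="Sb i" and X="S i" and X'="S i" and Z=U and g="L j k" 
       and Y="OT (S k) (S j)" and Y'="OT (S j) (S k)" and D=U, simplified])
  also have "\<dots> = V (w (S i) (L j k) U) (V (w U (L i k) (S j)) (w (S k) (L i j) U))"
    using assms le by (simp add: gmt[where A="S i" and f="L j k" and A'="S k" and g="Sb j" and B''=U and B=U, simplified]
      gm2t[where A=U and A'=U and g="Sb i" and B''="S k" and B="S j" and f="L i k", simplified]
      gmt[where A=U and f="L i k" and A'=U and g="Sb k" and B''="S i" and B="S j", simplified] al)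
  finally show ?thesis .
qed
end

context wsys begin

abbreviation wb where "wb a b \<equiv> wu S M E L a b"

lemma wb_eq: "wb a b = V (w (S a) (M b) U) (V (w U (L a b) (S b)) (w U (E b) (OT (S a) (S b))))"
  by (simp add: wu_def)

lemma wb_ty[simp]: "a < b \<Longrightarrow> b \<le> n \<Longrightarrow> Dom (wb a b) = OT (S a) (S b)"
  "a < b \<Longrightarrow> b \<le> n \<Longrightarrow> Cod (wb a b) = OT (S a) (S b)"
  by (simp_all add: wb_eq)

lemma K0: assumes "a < b" "b \<le> n" shows "V (wb a b) (L a b) = L a b"
proof -
  have le: "a \<le> n" using assms by simp
  have "V (wb a b) (L a b) = V (w (S a) (M b) U) (V (w U (L a b) (S b)) (V (w (S b) (L a b) U) (w U (E b) (OT (S b) (S a)))))"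
    using assms by (simp add: wb_eq wc[where A=U and f="E b" and X=U and X'="S b" and g="L a b" and Y="OT (S b) (S a)"
     and Y'="OT (S a) (S b)" and D=U, simplified])
  also have "\<dots> = V (L a b) (V (w U (M b) (S a)) (w U (E b) (OT (S b) (S a))))"
    using assms by (simp add: tl3[OF LMj[OF assms, symmetric]])
  also have "\<dots> = L a b" using assms MA[OF assms(2)] AL[OF assms]
    by (simp add: gm[where A=U and f="M b" and A'=U and g="E b" and B''="S b" and B="S a", simplified])
  finally show ?thesis .
qed
lemma Mass: assumes "i \<le> n" "Cod r = OT A (OT (S i) (OT (S i) (OT (S i) B)))" shows
  "V (w A (M i) B) (V (w (OT A (S i)) (M i) B) r) = V (w A (M i) B) (V (w A (M i) (OT (S i) B)) r)"
  using assms MA[OF assms(1)]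
  by (simp add: gmt[where A=A and f="M i" and A'="S i" and g="M i" and B''=U and B=B, simplified]
      gmt[where A=A and f="M i" and A'=U and g="M i" and B''="S i" and B=B, simplified])

lemma WM: assumes "a < b" "b \<le> n" shows
  "V (wb a b) (w (S a) (M b) U) = V (w (S a) (M b) U) (w U (wb a b) (S b))"
proof -
  have le: "a \<le> n" using assms by simp
  have "V (wb a b) (w (S a) (M b) U) = V (w (S a) (M b) U) (V (w (OT (S a) (S b)) (M b) U)
     (V (w U (L a b) (OT (S b) (S b))) (w U (E b) (OT (S a) (OT (S b) (S b))))))"
    using assms le by (simp add: wb_eq wcg[where A=U and f="E b" and X=U and X'="S b" and Z="S a" and g="M b" and Y="OT (S b) (S b)"
     and Y'="S b" and D=U, simplified] wcgt[where A=U and f="L a b" and X="OT (S b) (S a)" and X'="OT (S a) (S b)" and Z=U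
     and g="M b" and Y="OT (S b) (S b)" and Y'="S b" and D=U, simplified])
  also have "\<dots> = V (w (S a) (M b) U) (w U (wb a b) (S b))"
    using assms le by (simp add: Mass wb_eq w_distr)
  finally show ?thesis .
qed

lemma K1: assumes "a < b" "b \<le> n" shows
  "V (wb a b) (V (w (S a) (M b) U) (w U (L a b) (S b))) = V (w (S a) (M b) U) (w U (L a b) (S b))"
proof -
  have le: "a \<le> n" using assms by simp
  have "V (wb a b) (V (w (S a) (M b) U) (w U (L a b) (S b))) = V (w (S a) (M b) U) (w U (V (wb a b) (L a b)) (S b))"
    using assms le by (simp add: tl2[OF WM[OF assms]] w_V)
  then show ?thesis using K0[OF assms] by simp
qed
lemma LOC: assumes "a < b" "b \<le> n" shows
  "V (w (S a) (M b) U) (V (w U (L a b) (S b)) (w (S b) (M a) (S b))) = 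
   V (H (M a) (M b)) (V (w (S a) (L a b) (S b)) (w U (L a b) (OT (S a) (S b))))"
proof -
  have le: "a \<le> n" using assms by simp
  have "V (w (S a) (M b) U) (V (w U (L a b) (S b)) (w (S b) (M a) (S b))) = 
     V (w (S a) (M b) U) (w U (V (L a b) (w (S b) (M a) U)) (S b))"
    using assms le by (simp add: gm[where A=U and f="L a b" and A'="S b" and g="M a" and B''=U and B="S b", simplified])
  also have "\<dots> = V (w (S a) (M b) U) (V (w U (M a) (OT (S b) (S b))) (V (w (S a) (L a b) (S b)) (w U (L a b) (OT (S a) (S b)))))"
    using assms le by (simp add: LMi w_distr)
  also have "\<dots> = V (H (M a) (M b)) (V (w (S a) (L a b) (S b)) (w U (L a b) (OT (S a) (S b))))"
    using assms le wH2[of "M a" "M b"] by simp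
  finally show ?thesis .
qed

lemma YBw: assumes "a < b" "b < c" "c \<le> n" "Cod r = OT (S c) (OT (S b) (OT (S a) B))" shows
  "V (w (S a) (L b c) B) (V (w U (L a c) (OT (S b) B)) (V (w (S c) (L a b) B) r)) =
   V (w U (L a b) (OT (S c) B)) (V (w (S b) (L a c) B) (V (w U (L b c) (OT (S a) B)) r))"
proof -
  have "w U (V (w (S a) (L b c) U) (V (w U (L a c) (S b)) (w (S c) (L a b) U))) B =
        w U (V (w U (L a b) (S c)) (V (w (S b) (L a c) U) (w U (L b c) (S a)))) B"
    using YB[OF assms(1-3)] by simp
  then have "V (w (S a) (L b c) B) (V (w U (L a c) (OT (S b) B)) (w (S c) (L a b) B)) =
   V (w U (L a b) (OT (S c) B)) (V (w (S b) (L a c) B) (w U (L b c) (OT (S a) B)))"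
    using assms by (simp add: w_distr)
  note hh = this
  show ?thesis using assms by (simp add: tl3[OF hh])
qed

lemma K3: assumes "a < b" "b < c" "c \<le> n" shows
  "V (w U (wb a b) (S c)) (V (w (S a) (L b c) U) (V (w U (L a c) (S b)) (w (S c) (wb a b) U))) =
   V (w (S a) (L b c) U) (V (w U (L a c) (S b)) (w (S c) (wb a b) U))"
proof -
  have le: "a \<le> n" "b \<le> n" "a < c" using assms by simp_all
  define Q where "Q = V (w (S a) (M b) (S c)) (V (w (OT (S a) (S b)) (L b c) U) (V (w U (L a b) (OT (S c) (S b)))
     (V (w (S b) (L a c) (S b)) (V (w U (L b c) (OT (S a) (S b))) (w (S c) (E b) (OT (S a) (S b)))))))"
  have "V (w (S a) (L b c) U) (V (w U (L a c) (S b)) (w (S c) (wb a b) U)) =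
    V (w (S a) (L b c) U) (V (w (OT (S a) (S c)) (M b) U) (V (w U (L a c) (OT (S b) (S b)))
     (V (w (S c) (L a b) (S b)) (w (S c) (E b) (OT (S a) (S b))))))"
    using assms le by (simp add: wb_eq w_distr wcgt[where A=U and f="L a c" and X="OT (S c) (S a)" and X'="OT (S a) (S c)" and Z=U
     and g="M b" and Y="OT (S b) (S b)" and Y'="S b" and D=U, simplified])
  also have "\<dots> = V (w (S a) (M b) (S c)) (V (w (OT (S a) (S b)) (L b c) U) (V (w (S a) (L b c) (S b))
     (V (w U (L a c) (OT (S b) (S b))) (V (w (S c) (L a b) (S b)) (w (S c) (E b) (OT (S a) (S b)))))))"
    using assms le by (simp add: gmt[where A="S a" and f="L b c" and A'="S c" and g="M b" and B''=U and B=U, simplified]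
      LMi w_distr)
  also have "\<dots> = Q" unfolding Q_def using assms le by (simp add: YBw)
  finally have R: "V (w (S a) (L b c) U) (V (w U (L a c) (S b)) (w (S c) (wb a b) U)) = Q" .
  have WMc: "V (w U (wb a b) (S c)) (V (w (S a) (M b) (S c)) r) = V (w (S a) (M b) (S c)) (V (w U (wb a b) (OT (S b) (S c))) r)"
    if "Cod r = OT (S a) (OT (S b) (OT (S b) (S c)))" for r
  proof -
    have "w U (V (wb a b) (w (S a) (M b) U)) (S c) = w U (V (w (S a) (M b) U) (w U (wb a b) (S b))) (S c)"
      using WM[OF assms(1) le(2)] by simp
    then have "V (w U (wb a b) (S c)) (w (S a) (M b) (S c)) = V (w (S a) (M b) (S c)) (w U (wb a b) (OT (S b) (S c)))"
      using assms le by (simp add: w_distr)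
    note hh = this
    show ?thesis using that assms le by (simp add: tl2[OF hh])
  qed
  have "V (w U (wb a b) (S c)) Q = Q" unfolding Q_def using assms le
    by (simp add: WMc wcgt[where A=U and f="wb a b" and X="OT (S a) (S b)" and X'="OT (S a) (S b)" and Z=U
     and g="L b c" and Y="OT (S c) (S b)" and Y'="OT (S b) (S c)" and D=U, simplified] w_Vt K0)
  then show ?thesis using R by simp
qed
end


context smc begin

fun cr :: "(nat \<Rightarrow> _) \<Rightarrow> (nat \<Rightarrow> nat \<Rightarrow> _) \<Rightarrow> nat \<Rightarrow> nat list \<Rightarrow> _" where
  "cr S L x [] = Id (S x)"
| "cr S L x (i # is) = V (w (S i) (cr S L x is) U) (w U (L i x) (ob (map S is)))"

definition crok where "crok S L x is \<longleftrightarrow> (\<forall>i\<in>set is. Dom (L i x) = OT (S x) (S i) \<and> Cod (L i x) = OT (S i) (S x))"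

lemma crok_simps[simp]: "crok S L x []" "crok S L x (i # is) \<longleftrightarrow> Dom (L i x) = OT (S x) (S i) \<and> Cod (L i x) = OT (S i) (S x) \<and> crok S L x is"
  "crok S L x (xs @ ys) \<longleftrightarrow> crok S L x xs \<and> crok S L x ys"
  unfolding crok_def by auto

lemma cr_ty: "crok S L x is \<Longrightarrow> Dom (cr S L x is) = OT (S x) (ob (map S is)) \<and> Cod (cr S L x is) = OT (ob (map S is)) (S x)"
  by (induct "is") auto

lemma cr_ty'[simp]: "crok S L x is \<Longrightarrow> Dom (cr S L x is) = OT (S x) (ob (map S is))"
  "crok S L x is \<Longrightarrow> Cod (cr S L x is) = OT (ob (map S is)) (S x)"
  using cr_ty by auto

lemma cr_one[simp]: "Dom (L i x) = OT (S x) (S i) \<Longrightarrow> Cod (L i x) = OT (S i) (S x) \<Longrightarrow> cr S L x [i] = L i x"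
  by simp

lemma cr_append: "crok S L x xs \<Longrightarrow> crok S L x ys \<Longrightarrow> 
  cr S L x (xs @ ys) = V (w (ob (map S xs)) (cr S L x ys) U) (w U (cr S L x xs) (ob (map S ys)))"
proof (induct xs)
  case Nil then show ?case by simp
next
  case (Cons a xs)
  then show ?case by (simp add: w_distr)
qed

lemma cr_cong: "(\<And>i. i \<in> set is \<Longrightarrow> S' (f i) = S i \<and> L' (f i) y = L i x) \<Longrightarrow> S' y = S x \<Longrightarrow>
   cr S' L' y (map f is) = cr S L x is"
proof (induct "is")
  case (Cons a "is")
  have e: "map (S' \<circ> f) is = map S is" by (rule map_cong) (use Cons in auto)
  show ?case using Cons by (simp add: e)
qed simp

lemma ob_map_cong: "(\<And>x. x \<in> set xs \<Longrightarrow> f x = g x) \<Longrightarrow> ob (map f xs) = ob (map g xs)"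
  by (metis map_cong)

lemma mv_cr: "i \<le> m \<Longrightarrow> crok S L m [0..<m] \<Longrightarrow> mv S L m i = w U (cr S L m [0..<i]) (ob (map S [i..<m]))"
proof (induct i)
  case 0 then show ?case by simp
next
  case (Suc i)
  have ok: "crok S L m [0..<i]" "crok S L m [i]" using Suc.prems
    by (auto simp: crok_def)
  have e: "[i..<m] = i # [Suc i..<m]" using Suc.prems by (simp add: upt_conv_Cons)
  show ?case using Suc ok by (simp add: mvstep_def e cr_append w_distr)
qed

lemma larrow_cr: "crok S L m [0..<m] \<Longrightarrow> larrow S M E L m = 
   V (w (ob (map S [0..<m])) (M m) U) (V (w U (cr S L m [0..<m]) (S m)) (w U (E m) (ob (map S [0..<Suc m]))))"
  by (simp add: larrow_def mv_cr del: upt_Suc)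

lemma mv_cong: "(\<And>j. j \<le> m \<Longrightarrow> S' j = S j) \<Longrightarrow> (\<And>j. j < m \<Longrightarrow> L' j m = L j m) \<Longrightarrow> i \<le> m \<Longrightarrow>
  mv S' L' m i = mv S L m i"
proof (induct i)
  case (Suc i)
  have "ob (map S' [0..<i]) = ob (map S [0..<i])" "ob (map S' [Suc i..<m]) = ob (map S [Suc i..<m])" "ob (map S' [0..<m]) = ob (map S [0..<m])"
    using Suc.prems by (auto intro!: ob_map_cong)
  then show ?case using Suc by (simp add: mvstep_def)
next
  case 0
  have "ob (map S' [0..<m]) = ob (map S [0..<m])" using 0 by (auto intro!: ob_map_cong)
  then show ?case using 0 by simp
qed

lemma larrow_cong: "(\<And>j. j \<le> m \<Longrightarrow> S' j = S j) \<Longrightarrow> (\<And>j. j < m \<Longrightarrow> L' j m = L j m) \<Longrightarrow>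
   M' m = M m \<Longrightarrow> E' m = E m \<Longrightarrow> larrow S' M' E' L' m = larrow S M E L m"
proof -
  assume a: "\<And>j. j \<le> m \<Longrightarrow> S' j = S j" "\<And>j. j < m \<Longrightarrow> L' j m = L j m" "M' m = M m" "E' m = E m"
  have "ob (map S' [0..<m]) = ob (map S [0..<m])" using a by (auto intro!: ob_map_cong)
  then show ?thesis using a mv_cong[of m S' S L' L m] by (simp add: larrow_def)
qed

lemma wbar_cong: "(\<And>j. j \<le> m \<Longrightarrow> S' j = S j \<and> M' j = M j \<and> E' j = E j) \<Longrightarrow> 
   (\<And>i j. i < j \<Longrightarrow> j \<le> m \<Longrightarrow> L' i j = L i j) \<Longrightarrow> wbar S' M' E' L' m = wbar S M E L m"
proof (induct m)
  case (Suc m)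
  have "larrow S' M' E' L' (Suc m) = larrow S M E L (Suc m)" 
    by (rule larrow_cong) (use Suc.prems in auto)
  then show ?case using Suc by simp
qed simp

end

context wsys begin

abbreviation "CSa a \<equiv> CS (Suc a) S"
abbreviation "CLa a \<equiv> CL (Suc a) S M E L"
abbreviation "CMa a \<equiv> CM (Suc a) S M L"
abbreviation "CEa a \<equiv> CE (Suc a) E L"

lemma CL_ty: assumes "i < j" "Suc j \<le> n" shows
  "Dom (CLa a i j) = OT (CSa a j) (CSa a i) \<and> Cod (CLa a i j) = OT (CSa a i) (CSa a j)"
proof -
  consider "j < a" | "j = a" | "a < j \<and> i < a" | "a < j \<and> i = a" | "a < j \<and> a < i" by linarith
  then show ?thesis
  proof cases
    case 1 then show ?thesis using assms by (simp add: CL_def CS_def)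
  next
    case 2 then show ?thesis using assms by (simp add: CL_def CS_def wb_eq)
  next
    case 3 then show ?thesis using assms by (simp add: CL_def CS_def)
  next
    case 4 then show ?thesis using assms by (simp add: CL_def CS_def wb_eq)
  next
    case 5 then show ?thesis using assms by (simp add: CL_def CS_def)
  qed
qed

lemma crokC: "Suc j \<le> n \<Longrightarrow> set is \<subseteq> {..<j} \<Longrightarrow> crok (CSa a) (CLa a) j is"
  unfolding crok_def using CL_ty by auto

lemma upt_split: "a \<le> b \<Longrightarrow> b \<le> c \<Longrightarrow> [a..<c] = [a..<b] @ [b..<c]"
  by (metis le_Suc_ex upt_add_eq_append)

lemma upt_spl1: "a < j \<Longrightarrow> [0..<j] = [0..<a] @ a # [Suc a..<j]"
  using upt_split[of 0 a j] upt_conv_Cons[of a j] by simp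
lemma upt_spl2: "Suc a < j \<Longrightarrow> [0..<j] = [0..<a] @ a # Suc a # [Suc (Suc a)..<j]"
  using upt_spl1[of a j] upt_conv_Cons[of "Suc a" j] by simp

lemma ob_CS1: "j \<le> a \<Longrightarrow> ob (map (CSa a) [0..<j]) = ob (map S [0..<j])"
  by (rule ob_map_cong) (auto simp: CS_def)

lemma ob_CS2: "ob (map (CSa a) [Suc a..<j]) = ob (map S [Suc (Suc a)..<Suc j])"
proof -
  have "ob (map (CSa a) [Suc a..<j]) = ob (map (S \<circ> Suc) [Suc a..<j])"
    by (rule ob_map_cong) (auto simp: CS_def)
  also have "\<dots> = ob (map S [Suc (Suc a)..<Suc j])" by (simp only: map_map[symmetric] map_Suc_upt)
  finally show ?thesis .
qed

lemma ob_CS3: "a < j \<Longrightarrow> ob (map (CSa a) [0..<j]) = ob (map S [0..<Suc j])"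
proof -
  assume aj: "a < j"
  have e: "[0..<j] = [0..<a] @ a # [Suc a..<j]" by (rule upt_spl1) (use aj in simp)
  have e2: "[0..<Suc j] = [0..<a] @ a # Suc a # [Suc (Suc a)..<Suc j]" by (rule upt_spl2) (use aj in simp)
  show ?thesis unfolding e e2 using ob_CS1[of a a] ob_CS2[of a j] by (simp add: CS_def)
qed

end

context wsys begin

lemma crok_orig: "m \<le> n \<Longrightarrow> set is \<subseteq> {..<m} \<Longrightarrow> crok S L m is"
  unfolding crok_def by auto

lemma crC: assumes "a < j" "Suc j \<le> n" shows
  "cr (CSa a) (CLa a) j [0..<j] = V (cr S L (Suc j) [0..<Suc j]) 
     (w (S (Suc j)) (w (ob (map S [0..<a])) (wb a (Suc a)) (ob (map S [Suc (Suc a)..<Suc j]))) U)"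
proof -
  define P0 where "P0 = ob (map S [0..<a])"
  define P2 where "P2 = ob (map S [Suc (Suc a)..<Suc j])"
  define rC where "rC = [Suc a..<j]"
  define rO where "rO = [Suc (Suc a)..<Suc j]"
  have sp1: "[0..<j] = [0..<a] @ a # rC" unfolding rC_def by (rule upt_spl1) (use assms in simp)
  have sp2: "[0..<Suc j] = [0..<a] @ a # Suc a # rO" unfolding rO_def by (rule upt_spl2) (use assms in simp)
  have okC1: "crok (CSa a) (CLa a) j [0..<a]" by (rule crokC) (use assms in \<open>auto simp: rC_def\<close>)
  have okC2: "crok (CSa a) (CLa a) j (a # rC)" by (rule crokC) (use assms in \<open>auto simp: rC_def\<close>)
  note okC = okC1 okC2
  have okO: "crok S L (Suc j) [0..<a]" "crok S L (Suc j) (a # Suc a # rO)"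
    using assms by (auto intro!: crok_orig simp: rO_def)
  have okO2: "crok S L (Suc j) rO" using okO by simp
  have c1: "cr (CSa a) (CLa a) j [0..<a] = cr S L (Suc j) [0..<a]"
    using cr_cong[of "[0..<a]" "CSa a" id S "CLa a" j L "Suc j"] assms by (simp add: CS_def CL_def)
  have c2: "cr (CSa a) (CLa a) j rC = cr S L (Suc j) rO"
    using cr_cong[of rC S Suc "CSa a" L "Suc j" "CLa a" j] assms 
    by (simp add: CS_def CL_def rC_def rO_def map_Suc_upt)
  have c3: "CLa a a j = V (w (S a) (L (Suc a) (Suc j)) U) (V (w U (L a (Suc j)) (S (Suc a))) (w (S (Suc j)) (wb a (Suc a)) U))"
    using assms by (simp add: CL_def)
  have o1: "ob (map (CSa a) [0..<a]) = P0" unfolding P0_def by (simp add: ob_CS1)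
  have o2: "ob (map (CSa a) rC) = P2" unfolding P2_def rC_def by (simp add: ob_CS2)
  have o3: "ob (map S rO) = P2" unfolding P2_def rO_def ..
  have ty0: "Dom (cr S L (Suc j) [0..<a]) = OT (S (Suc j)) P0" "Cod (cr S L (Suc j) [0..<a]) = OT P0 (S (Suc j))"
    using okO unfolding P0_def by simp_all
  have ty2: "Dom (cr S L (Suc j) rO) = OT (S (Suc j)) P2" "Cod (cr S L (Suc j) rO) = OT P2 (S (Suc j))"
    using okO2 o3 by simp_all
  have "cr (CSa a) (CLa a) j [0..<j] = V (w P0 (cr (CSa a) (CLa a) j (a # rC)) U) (w U (cr (CSa a) (CLa a) j [0..<a]) (ob (map (CSa a) (a # rC))))"
    unfolding sp1 using cr_append[OF okC] o1 by simp
  also have "\<dots> = V (w (OT P0 (OT (S a) (S (Suc a)))) (cr S L (Suc j) rO) U) (V (w (OT P0 (S a)) (L (Suc a) (Suc j)) P2)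
      (V (w P0 (L a (Suc j)) (OT (S (Suc a)) P2)) (V (w (OT P0 (S (Suc j))) (wb a (Suc a)) P2)
       (w U (cr S L (Suc j) [0..<a]) (OT (S a) (OT (S (Suc a)) P2))))))"
    using assms ty0 ty2 by (simp add: c1 c2 c3 o2 w_distr CS_def)
  also have "\<dots> = V (w (OT P0 (OT (S a) (S (Suc a)))) (cr S L (Suc j) rO) U) (V (w (OT P0 (S a)) (L (Suc a) (Suc j)) P2)
      (V (w P0 (L a (Suc j)) (OT (S (Suc a)) P2)) (V (w U (cr S L (Suc j) [0..<a]) (OT (S a) (OT (S (Suc a)) P2)))
       (w (OT (S (Suc j)) P0) (wb a (Suc a)) P2))))"
    using assms ty0 by (simp add: wcg[where A=U and f="cr S L (Suc j) [0..<a]" and X="OT (S (Suc j)) P0" and 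
      X'="OT P0 (S (Suc j))" and Z=U and g="wb a (Suc a)" and Y="OT (S a) (S (Suc a))" and Y'="OT (S a) (S (Suc a))"
      and D=P2, simplified, symmetric])
  also have "\<dots> = V (cr S L (Suc j) [0..<Suc j]) (w (S (Suc j)) (w P0 (wb a (Suc a)) P2) U)"
    unfolding sp2 using cr_append[OF okO] assms ty0 ty2 o3 by (simp add: w_distr P0_def)
  finally show ?thesis unfolding P0_def P2_def .
qed

lemma A1: assumes "a < j" "Suc j \<le> n" shows
  "larrow (CSa a) (CMa a) (CEa a) (CLa a) j = V (larrow S M E L (Suc j)) 
     (w (ob (map S [0..<a])) (wb a (Suc a)) (OT (ob (map S [Suc (Suc a)..<Suc j])) (S (Suc j))))"
proof -
  define P0 where "P0 = ob (map S [0..<a])"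
  define P2 where "P2 = ob (map S [Suc (Suc a)..<Suc j])"
  have sp2: "[0..<Suc j] = [0..<a] @ a # Suc a # [Suc (Suc a)..<Suc j]" by (rule upt_spl2) (use assms in simp)
  have oL: "ob (map S [0..<Suc j]) = OT P0 (OT (S a) (OT (S (Suc a)) P2))" unfolding P0_def P2_def sp2 by simp
  have oL2: "ob (map S [0..<Suc (Suc j)]) = OT P0 (OT (S a) (OT (S (Suc a)) (OT P2 (S (Suc j)))))"
    using oL by (simp only: upt_Suc_append[of 0 "Suc j"] obs map_append) simp
  have okC: "crok (CSa a) (CLa a) j [0..<j]" using assms by (auto intro!: crokC)
  have okO: "crok S L (Suc j) [0..<Suc j]" using assms by (auto intro!: crok_orig)
  have tyc: "Dom (cr S L (Suc j) [0..<Suc j]) = OT (S (Suc j)) (OT P0 (OT (S a) (OT (S (Suc a)) P2)))"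
     "Cod (cr S L (Suc j) [0..<Suc j]) = OT (OT P0 (OT (S a) (OT (S (Suc a)) P2))) (S (Suc j))"
    using okO oL by simp_all
  have "larrow (CSa a) (CMa a) (CEa a) (CLa a) j = V (w (ob (map S [0..<Suc j])) (M (Suc j)) U)
     (V (w U (cr S L (Suc j) [0..<Suc j]) (S (Suc j))) (V (w (S (Suc j)) (w P0 (wb a (Suc a)) P2) (S (Suc j)))
       (w U (E (Suc j)) (ob (map S [0..<Suc (Suc j)])))))"
    using assms tyc oL oL2 unfolding larrow_cr[OF okC]
    by (simp add: crC ob_CS3 CS_def CM_def CE_def w_distr P0_def P2_def del: upt_Suc)
  also have "\<dots> = V (w (ob (map S [0..<Suc j])) (M (Suc j)) U)
     (V (w U (cr S L (Suc j) [0..<Suc j]) (S (Suc j))) (V (w U (E (Suc j)) (ob (map S [0..<Suc (Suc j)])))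
       (w P0 (wb a (Suc a)) (OT P2 (S (Suc j))))))"
    using assms tyc unfolding oL2 oL 
    by (simp add: wcg[where A=U and f="E (Suc j)" and X=U and X'="S (Suc j)" and Z=U and g="w P0 (wb a (Suc a)) P2"
      and Y="OT P0 (OT (S a) (OT (S (Suc a)) P2))" and Y'="OT P0 (OT (S a) (OT (S (Suc a)) P2))" and D="S (Suc j)", simplified, symmetric]
      del: upt_Suc)
  also have "\<dots> = V (larrow S M E L (Suc j)) (w P0 (wb a (Suc a)) (OT P2 (S (Suc j))))"
    unfolding larrow_cr[OF okO] using assms tyc oL oL2 by (simp del: upt_Suc)
  finally show ?thesis unfolding P0_def P2_def .
qed
end

context wsys begin

lemma K3w: assumes "a < b" "b < c" "c \<le> n" "Cod r = OT P0 (OT (S c) (OT (S a) (OT (S b) P2)))" shows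
  "V (w P0 (wb a b) (OT (S c) P2)) (V (w (OT P0 (S a)) (L b c) P2) (V (w P0 (L a c) (OT (S b) P2)) (V (w (OT P0 (S c)) (wb a b) P2) r))) =
   V (w (OT P0 (S a)) (L b c) P2) (V (w P0 (L a c) (OT (S b) P2)) (V (w (OT P0 (S c)) (wb a b) P2) r))"
proof -
  have le: "a \<le> n" "b \<le> n" "a < c" using assms by simp_all
  have "w P0 (V (w U (wb a b) (S c)) (V (w (S a) (L b c) U) (V (w U (L a c) (S b)) (w (S c) (wb a b) U)))) P2 =
   w P0 (V (w (S a) (L b c) U) (V (w U (L a c) (S b)) (w (S c) (wb a b) U))) P2"
    using K3[OF assms(1-3)] by simp
  then have "V (w P0 (wb a b) (OT (S c) P2)) (V (w (OT P0 (S a)) (L b c) P2) (V (w P0 (L a c) (OT (S b) P2)) (w (OT P0 (S c)) (wb a b) P2))) =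
   V (w (OT P0 (S a)) (L b c) P2) (V (w P0 (L a c) (OT (S b) P2)) (w (OT P0 (S c)) (wb a b) P2))"
    using assms le by (simp add: w_distr)
  then have "V (V (w P0 (wb a b) (OT (S c) P2)) (V (w (OT P0 (S a)) (L b c) P2) (V (w P0 (L a c) (OT (S b) P2)) (w (OT P0 (S c)) (wb a b) P2)))) r =
   V (V (w (OT P0 (S a)) (L b c) P2) (V (w P0 (L a c) (OT (S b) P2)) (w (OT P0 (S c)) (wb a b) P2))) r" by simp
  then show ?thesis using assms le by simp
qed

lemma crK3: assumes "a < j" "Suc j \<le> n" shows
  "V (w U (w (ob (map S [0..<a])) (wb a (Suc a)) (ob (map S [Suc (Suc a)..<Suc j]))) (S (Suc j))) 
    (V (cr S L (Suc j) [0..<Suc j]) (w (S (Suc j)) (w (ob (map S [0..<a])) (wb a (Suc a)) (ob (map S [Suc (Suc a)..<Suc j]))) U)) =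
   V (cr S L (Suc j) [0..<Suc j]) (w (S (Suc j)) (w (ob (map S [0..<a])) (wb a (Suc a)) (ob (map S [Suc (Suc a)..<Suc j]))) U)"
proof -
  define P0 where "P0 = ob (map S [0..<a])"
  define P2 where "P2 = ob (map S [Suc (Suc a)..<Suc j])"
  define rO where "rO = [Suc (Suc a)..<Suc j]"
  have sp2: "[0..<Suc j] = [0..<a] @ a # Suc a # rO" unfolding rO_def by (rule upt_spl2) (use assms in simp)
  have okO: "crok S L (Suc j) [0..<a]" "crok S L (Suc j) (a # Suc a # rO)"
    using assms by (auto intro!: crok_orig simp: rO_def)
  have okO2: "crok S L (Suc j) rO" using okO by simp
  have o3: "ob (map S rO) = P2" unfolding P2_def rO_def ..
  have ty0: "Dom (cr S L (Suc j) [0..<a]) = OT (S (Suc j)) P0" "Cod (cr S L (Suc j) [0..<a]) = OT P0 (S (Suc j))"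
    using okO unfolding P0_def by simp_all
  have ty2: "Dom (cr S L (Suc j) rO) = OT (S (Suc j)) P2" "Cod (cr S L (Suc j) rO) = OT P2 (S (Suc j))"
    using okO2 o3 by simp_all
  have cre: "cr S L (Suc j) [0..<Suc j] = V (w (OT P0 (OT (S a) (S (Suc a)))) (cr S L (Suc j) rO) U) (V (w (OT P0 (S a)) (L (Suc a) (Suc j)) P2)
      (V (w P0 (L a (Suc j)) (OT (S (Suc a)) P2)) (w U (cr S L (Suc j) [0..<a]) (OT (S a) (OT (S (Suc a)) P2)))))"
    unfolding sp2 using cr_append[OF okO] assms ty0 ty2 o3 by (simp add: w_distr P0_def)
  have "V (w P0 (wb a (Suc a)) (OT P2 (S (Suc j)))) (V (cr S L (Suc j) [0..<Suc j]) (w (OT (S (Suc j)) P0) (wb a (Suc a)) P2)) =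
     V (w (OT P0 (OT (S a) (S (Suc a)))) (cr S L (Suc j) rO) U) (V (w P0 (wb a (Suc a)) (OT (S (Suc j)) P2)) (V (w (OT P0 (S a)) (L (Suc a) (Suc j)) P2)
      (V (w P0 (L a (Suc j)) (OT (S (Suc a)) P2)) (V (w (OT P0 (S (Suc j))) (wb a (Suc a)) P2) 
      (w U (cr S L (Suc j) [0..<a]) (OT (S a) (OT (S (Suc a)) P2)))))))"
    unfolding cre using assms ty0 ty2 
    by (simp add: wcg[where A=U and f="cr S L (Suc j) [0..<a]" and X="OT (S (Suc j)) P0" and 
      X'="OT P0 (S (Suc j))" and Z=U and g="wb a (Suc a)" and Y="OT (S a) (S (Suc a))" and Y'="OT (S a) (S (Suc a))"
      and D=P2, simplified]
      wcgt[where A=P0 and f="wb a (Suc a)" and X="OT (S a) (S (Suc a))" and X'="OT (S a) (S (Suc a))" and Z=U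
       and g="cr S L (Suc j) rO" and Y="OT (S (Suc j)) P2" and Y'="OT P2 (S (Suc j))" and D=U, simplified])
  also have "\<dots> = V (w (OT P0 (OT (S a) (S (Suc a)))) (cr S L (Suc j) rO) U) (V (w (OT P0 (S a)) (L (Suc a) (Suc j)) P2)
      (V (w P0 (L a (Suc j)) (OT (S (Suc a)) P2)) (V (w (OT P0 (S (Suc j))) (wb a (Suc a)) P2) 
      (w U (cr S L (Suc j) [0..<a]) (OT (S a) (OT (S (Suc a)) P2))))))"
    using assms ty0 ty2 by (simp add: K3w)
  also have "\<dots> = V (cr S L (Suc j) [0..<Suc j]) (w (OT (S (Suc j)) P0) (wb a (Suc a)) P2)"
    unfolding cre using assms ty0 ty2 
    by (simp add: wcg[where A=U and f="cr S L (Suc j) [0..<a]" and X="OT (S (Suc j)) P0" and 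
      X'="OT P0 (S (Suc j))" and Z=U and g="wb a (Suc a)" and Y="OT (S a) (S (Suc a))" and Y'="OT (S a) (S (Suc a))"
      and D=P2, simplified])
  finally show ?thesis unfolding P0_def P2_def by simp
qed

end

context wsys begin

lemma Acomm: assumes "a < j" "Suc j \<le> n" shows
  "V (w (ob (map S [0..<a])) (wb a (Suc a)) (OT (ob (map S [Suc (Suc a)..<Suc j])) (S (Suc j))))
    (V (larrow S M E L (Suc j)) (w (ob (map S [0..<a])) (wb a (Suc a)) (OT (ob (map S [Suc (Suc a)..<Suc j])) (S (Suc j))))) =
   V (larrow S M E L (Suc j)) (w (ob (map S [0..<a])) (wb a (Suc a)) (OT (ob (map S [Suc (Suc a)..<Suc j])) (S (Suc j))))"
proof -
  define P0 where "P0 = ob (map S [0..<a])"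
  define P2 where "P2 = ob (map S [Suc (Suc a)..<Suc j])"
  have sp2: "[0..<Suc j] = [0..<a] @ a # Suc a # [Suc (Suc a)..<Suc j]" by (rule upt_spl2) (use assms in simp)
  have oL: "ob (map S [0..<Suc j]) = OT P0 (OT (S a) (OT (S (Suc a)) P2))" unfolding P0_def P2_def sp2 by simp
  have oL2: "ob (map S [0..<Suc (Suc j)]) = OT P0 (OT (S a) (OT (S (Suc a)) (OT P2 (S (Suc j)))))"
    using oL by (simp only: upt_Suc_append[of 0 "Suc j"] obs map_append) simp
  have okO: "crok S L (Suc j) [0..<Suc j]" using assms by (auto intro!: crok_orig)
  have tyc: "Dom (cr S L (Suc j) [0..<Suc j]) = OT (S (Suc j)) (OT P0 (OT (S a) (OT (S (Suc a)) P2)))"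
     "Cod (cr S L (Suc j) [0..<Suc j]) = OT (OT P0 (OT (S a) (OT (S (Suc a)) P2))) (S (Suc j))"
    using okO oL by simp_all
  define X where "X = V (w (OT P0 (OT (S a) (OT (S (Suc a)) P2))) (M (Suc j)) U)
     (V (w U (cr S L (Suc j) [0..<Suc j]) (S (Suc j))) (V (w (S (Suc j)) (w P0 (wb a (Suc a)) P2) (S (Suc j)))
       (w U (E (Suc j)) (OT P0 (OT (S a) (OT (S (Suc a)) (OT P2 (S (Suc j)))))))))"
  have e1: "V (larrow S M E L (Suc j)) (w P0 (wb a (Suc a)) (OT P2 (S (Suc j)))) = X"
    unfolding larrow_cr[OF okO] X_def oL oL2 using assms tyc
    by (simp add: wcg[where A=U and f="E (Suc j)" and X=U and X'="S (Suc j)" and Z=U and g="w P0 (wb a (Suc a)) P2"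
      and Y="OT P0 (OT (S a) (OT (S (Suc a)) P2))" and Y'="OT P0 (OT (S a) (OT (S (Suc a)) P2))" and D="S (Suc j)", simplified]
      del: upt_Suc)
  have k: "V (w U (w P0 (wb a (Suc a)) P2) (S (Suc j))) 
    (V (cr S L (Suc j) [0..<Suc j]) (w (S (Suc j)) (w P0 (wb a (Suc a)) P2) U)) =
   V (cr S L (Suc j) [0..<Suc j]) (w (S (Suc j)) (w P0 (wb a (Suc a)) P2) U)"
    using crK3[OF assms] unfolding P0_def P2_def .
  have "w U (V (w U (w P0 (wb a (Suc a)) P2) (S (Suc j))) 
    (V (cr S L (Suc j) [0..<Suc j]) (w (S (Suc j)) (w P0 (wb a (Suc a)) P2) U))) (S (Suc j)) =
    w U (V (cr S L (Suc j) [0..<Suc j]) (w (S (Suc j)) (w P0 (wb a (Suc a)) P2) U)) (S (Suc j))" using k by simp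
  then have k2: "V (w P0 (wb a (Suc a)) (OT P2 (OT (S (Suc j)) (S (Suc j))))) (V (w U (cr S L (Suc j) [0..<Suc j]) (S (Suc j)))
     (w (OT (S (Suc j)) P0) (wb a (Suc a)) (OT P2 (S (Suc j))))) = 
     V (w U (cr S L (Suc j) [0..<Suc j]) (S (Suc j))) (w (OT (S (Suc j)) P0) (wb a (Suc a)) (OT P2 (S (Suc j))))"
    using assms tyc by (simp add: w_distr)
  have "V (w P0 (wb a (Suc a)) (OT P2 (S (Suc j)))) X = X"
    unfolding X_def using assms tyc
    by (simp add: wcgt[where A=U and f="w P0 (wb a (Suc a)) P2" and X="OT P0 (OT (S a) (OT (S (Suc a)) P2))" 
      and X'="OT P0 (OT (S a) (OT (S (Suc a)) P2))" and Z=U and g="M (Suc j)" and Y="OT (S (Suc j)) (S (Suc j))" and Y'="S (Suc j)"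
      and D=U, simplified] tl3[OF k2] del: upt_Suc)
  then show ?thesis using e1 unfolding P0_def P2_def by simp
qed

lemma Atop: assumes "Suc a \<le> n" shows
  "V (w (ob (map S [0..<a])) (wb a (Suc a)) U) (larrow S M E L (Suc a)) = larrow S M E L (Suc a)"
proof -
  define P0 where "P0 = ob (map S [0..<a])"
  have okO: "crok S L (Suc a) [0..<a]" "crok S L (Suc a) [a]" using assms by (auto intro!: crok_orig)
  have ty0: "Dom (cr S L (Suc a) [0..<a]) = OT (S (Suc a)) P0" "Cod (cr S L (Suc a) [0..<a]) = OT P0 (S (Suc a))"
    using okO unfolding P0_def by simp_all
  have cre: "cr S L (Suc a) [0..<Suc a] = V (w P0 (L a (Suc a)) U) (w U (cr S L (Suc a) [0..<a]) (S a))"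
    using cr_append[OF okO] assms unfolding P0_def by simp
  have okA: "crok S L (Suc a) [0..<Suc a]" using assms by (auto intro!: crok_orig)
  have k: "V (w P0 (wb a (Suc a)) U) (V (w (OT P0 (S a)) (M (Suc a)) U) (w P0 (L a (Suc a)) (S (Suc a)))) =
      V (w (OT P0 (S a)) (M (Suc a)) U) (w P0 (L a (Suc a)) (S (Suc a)))"
  proof -
    have "w P0 (V (wb a (Suc a)) (V (w (S a) (M (Suc a)) U) (w U (L a (Suc a)) (S (Suc a))))) U =
          w P0 (V (w (S a) (M (Suc a)) U) (w U (L a (Suc a)) (S (Suc a)))) U" using K1[of a "Suc a"] assms by simp
    then show ?thesis using assms by (simp add: w_distr)
  qed
  show ?thesis unfolding larrow_cr[OF okA] cre using assms ty0 by (simp add: P0_def[symmetric] tl3[OF k] w_distr)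
qed

lemma larrow_ty: "m \<le> n \<Longrightarrow> Dom (larrow S M E L m) = ob (map S [0..<Suc m]) \<and> Cod (larrow S M E L m) = ob (map S [0..<Suc m])"
proof -
  assume m: "m \<le> n"
  have okm: "crok S L m [0..<m]" using m by (auto intro!: crok_orig)
  show ?thesis unfolding larrow_cr[OF okm] using okm m by simp
qed

lemma wbar_ty: "m \<le> n \<Longrightarrow> Dom (wbar S M E L m) = ob (map S [0..<Suc m]) \<and> Cod (wbar S M E L m) = ob (map S [0..<Suc m])"
  by (induct m) (auto simp: larrow_ty simp del: upt_Suc, simp_all add: larrow_ty)

lemma A2: "Suc a \<le> m \<Longrightarrow> m \<le> n \<Longrightarrow> 
  V (w (ob (map S [0..<a])) (wb a (Suc a)) (ob (map S [Suc (Suc a)..<Suc m]))) (wbar S M E L m) = wbar S M E L m"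
proof (induct m)
  case 0 then show ?case by simp
next
  case (Suc m)
  have okm: "crok S L (Suc m) [0..<Suc m]" using Suc by (auto intro!: crok_orig)
  show ?case
  proof (cases "a = m")
    case True
    have ty: "Dom (wbar S M E L m) = ob (map S [0..<Suc m])" "Cod (wbar S M E L m) = ob (map S [0..<Suc m])"
      using wbar_ty[of m] Suc by simp_all
    have tyl: "Dom (larrow S M E L (Suc m)) = ob (map S [0..<Suc (Suc m)])" 
      "Cod (larrow S M E L (Suc m)) = ob (map S [0..<Suc (Suc m)])"
      using larrow_ty[of "Suc m"] Suc by simp_all
    have "V (w (ob (map S [0..<a])) (wb a (Suc a)) U) (wbar S M E L (Suc m)) = 
      V (V (w (ob (map S [0..<a])) (wb a (Suc a)) U) (larrow S M E L (Suc m))) (w U (wbar S M E L m) (S (Suc m)))"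
      using True ty tyl Suc by simp
    then show ?thesis using Atop[of a] True Suc by simp
  next
    case False
    then have am: "a < m" using Suc by simp
    have IH: "V (w (ob (map S [0..<a])) (wb a (Suc a)) (ob (map S [Suc (Suc a)..<Suc m]))) (wbar S M E L m) = wbar S M E L m"
      using Suc am by simp
    have ty: "Dom (wbar S M E L m) = OT (ob (map S [0..<m])) (S m)" "Cod (wbar S M E L m) = OT (ob (map S [0..<m])) (S m)"
      using wbar_ty[of m] Suc by simp_all
    have tyl: "Dom (larrow S M E L (Suc m)) = OT (ob (map S [0..<m])) (OT (S m) (S (Suc m)))" 
      "Cod (larrow S M E L (Suc m)) = OT (ob (map S [0..<m])) (OT (S m) (S (Suc m)))"
      using larrow_ty[of "Suc m"] Suc by simp_all
    define Wt where "Wt = w (ob (map S [0..<a])) (wb a (Suc a)) (OT (ob (map S [Suc (Suc a)..<Suc m])) (S (Suc m)))"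
    have tyW: "Dom Wt = OT (ob (map S [0..<Suc m])) (S (Suc m))" "Cod Wt = OT (ob (map S [0..<Suc m])) (S (Suc m))"
    proof -
      have sp2: "[0..<Suc m] = [0..<a] @ a # Suc a # [Suc (Suc a)..<Suc m]" by (rule upt_spl2) (use am in simp)
      show "Dom Wt = OT (ob (map S [0..<Suc m])) (S (Suc m))" "Cod Wt = OT (ob (map S [0..<Suc m])) (S (Suc m))"
        unfolding Wt_def sp2 using am Suc by (simp_all del: upt_Suc)
    qed
    have e: "w U (wbar S M E L m) (S (Suc m)) = V Wt (w U (wbar S M E L m) (S (Suc m)))"
    proof -
      have sp2: "[0..<Suc m] = [0..<a] @ a # Suc a # [Suc (Suc a)..<Suc m]" by (rule upt_spl2) (use am in simp)
      have d: "w U (V (w (ob (map S [0..<a])) (wb a (Suc a)) (ob (map S [Suc (Suc a)..<Suc m]))) (wbar S M E L m)) (S (Suc m)) = 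
        V (w U (w (ob (map S [0..<a])) (wb a (Suc a)) (ob (map S [Suc (Suc a)..<Suc m]))) (S (Suc m))) (w U (wbar S M E L m) (S (Suc m)))"
        by (rule w_distr) (use wbar_ty[of m] sp2 am Suc in \<open>simp del: upt_Suc\<close>)
      show ?thesis using IH d unfolding Wt_def by (simp del: upt_Suc)
    qed
    have ac: "V Wt (V (larrow S M E L (Suc m)) Wt) = V (larrow S M E L (Suc m)) Wt"
      unfolding Wt_def by (rule Acomm) (use am Suc in auto)
    have "V Wt (wbar S M E L (Suc m)) = V Wt (V (larrow S M E L (Suc m)) (V Wt (w U (wbar S M E L m) (S (Suc m)))))"
      using e by simp
    also have "\<dots> = V (V Wt (V (larrow S M E L (Suc m)) Wt)) (w U (wbar S M E L m) (S (Suc m)))"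
      using ty tyl tyW by simp
    also have "\<dots> = V (larrow S M E L (Suc m)) (V Wt (w U (wbar S M E L m) (S (Suc m))))"
      using ty tyl tyW ac by simp
    also have "\<dots> = wbar S M E L (Suc m)" using e by simp
    finally show ?thesis unfolding Wt_def using am Suc by simp
  qed
qed

end

context wsys begin

lemma crM: "Suc a \<le> n \<Longrightarrow> set is \<subseteq> {..<a} \<Longrightarrow> 
  V (cr (CSa a) (CLa a) a is) (w U (L a (Suc a)) (ob (map S is))) = 
  V (w (ob (map S is)) (L a (Suc a)) U) (V (w U (cr S L (Suc a) is) (S a)) (w (S (Suc a)) (cr S L a is) U))"
proof (induct "is")
  case Nil then show ?case by (simp add: CS_def)
next
  case (Cons i "is")
  have ia: "i < a" "Suc a \<le> n" "set is \<subseteq> {..<a}" using Cons by auto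
  have IH: "V (cr (CSa a) (CLa a) a is) (w U (L a (Suc a)) (ob (map S is))) = 
    V (w (ob (map S is)) (L a (Suc a)) U) (V (w U (cr S L (Suc a) is) (S a)) (w (S (Suc a)) (cr S L a is) U))"
    using Cons by simp
  have obc: "ob (map (CSa a) is) = ob (map S is)" by (rule ob_map_cong) (use ia in \<open>auto simp: CS_def\<close>)
  have okb: "crok S L (Suc a) is" "crok S L a is" using ia by (auto intro!: crok_orig)
  have okc: "crok (CSa a) (CLa a) a is" using ia by (auto intro!: crokC)
  have tyc: "Dom (cr (CSa a) (CLa a) a is) = OT (OT (S a) (S (Suc a))) (ob (map S is))"
     "Cod (cr (CSa a) (CLa a) a is) = OT (ob (map S is)) (OT (S a) (S (Suc a)))"
    using okc obc by (simp_all add: CS_def)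
  have cl: "CLa a i a = V (w U (L i a) (S (Suc a))) (V (w (S a) (L i (Suc a)) U) (w U (wb a (Suc a)) (S i)))"
    using ia by (simp add: CL_def)
  have IHw: "V (w (S i) (cr (CSa a) (CLa a) a is) U) (V (w (S i) (L a (Suc a)) (ob (map S is))) r) = 
    V (w (OT (S i) (ob (map S is))) (L a (Suc a)) U) (V (w (S i) (cr S L (Suc a) is) (S a)) (V (w (OT (S i) (S (Suc a))) (cr S L a is) U) r))"
    if "Cod r = OT (S i) (OT (S (Suc a)) (OT (S a) (ob (map S is))))" for r
  proof -
    have "w (S i) (V (cr (CSa a) (CLa a) a is) (w U (L a (Suc a)) (ob (map S is)))) U = 
      w (S i) (V (w (ob (map S is)) (L a (Suc a)) U) (V (w U (cr S L (Suc a) is) (S a)) (w (S (Suc a)) (cr S L a is) U))) U"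
      using IH by simp
    then have "V (w (S i) (cr (CSa a) (CLa a) a is) U) (w (S i) (L a (Suc a)) (ob (map S is))) = 
    V (w (OT (S i) (ob (map S is))) (L a (Suc a)) U) (V (w (S i) (cr S L (Suc a) is) (S a)) (w (OT (S i) (S (Suc a))) (cr S L a is) U))"
      using ia tyc okb by (simp add: w_distr)
    note hh = this
    show ?thesis using that ia tyc okb by (simp add: tl2[OF hh])
  qed
  have ybw: "V (w U (L i a) (OT (S (Suc a)) X)) (V (w (S a) (L i (Suc a)) X) (w U (L a (Suc a)) (OT (S i) X))) =
     V (w (S i) (L a (Suc a)) X) (V (w U (L i (Suc a)) (OT (S a) X)) (w (S (Suc a)) (L i a) X))" for X
  proof -
    have "w U (V (w U (L i a) (S (Suc a))) (V (w (S a) (L i (Suc a)) U) (w U (L a (Suc a)) (S i)))) X =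
          w U (V (w (S i) (L a (Suc a)) U) (V (w U (L i (Suc a)) (S a)) (w (S (Suc a)) (L i a) U))) X"
      using YB[of i a "Suc a"] ia by simp
    then show ?thesis using ia by (simp add: w_distr)
  qed
  have "V (cr (CSa a) (CLa a) a (i # is)) (w U (L a (Suc a)) (ob (map S (i # is)))) =
    V (w (S i) (cr (CSa a) (CLa a) a is) U) (V (w U (L i a) (OT (S (Suc a)) (ob (map S is)))) (V (w (S a) (L i (Suc a)) (ob (map S is)))
       (V (w U (wb a (Suc a)) (OT (S i) (ob (map S is)))) (w U (L a (Suc a)) (OT (S i) (ob (map S is)))))))"
    using ia tyc by (simp add: obc cl CS_def w_distr)
  also have "\<dots> = V (w (S i) (cr (CSa a) (CLa a) a is) U) (V (w (S i) (L a (Suc a)) (ob (map S is))) (V (w U (L i (Suc a)) (OT (S a) (ob (map S is))))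
       (w (S (Suc a)) (L i a) (ob (map S is)))))"
    using ia tyc by (simp add: w_Vt w_V K0 ybw)
  also have "\<dots> = V (w (ob (map S (i # is))) (L a (Suc a)) U) (V (w U (cr S L (Suc a) (i # is)) (S a)) (w (S (Suc a)) (cr S L a (i # is)) U))"
    using ia tyc okb by (simp add: IHw w_distr wcgt[where A=U and f="L i (Suc a)" and X="OT (S (Suc a)) (S i)" 
      and X'="OT (S i) (S (Suc a))" and Z=U and g="cr S L a is" and Y="OT (S a) (ob (map S is))" and Y'="OT (ob (map S is)) (S a)"
      and D=U, simplified])
  finally show ?case .
qed

lemma Bl: assumes "Suc a \<le> n" shows
  "larrow (CSa a) (CMa a) (CEa a) (CLa a) a = V (larrow S M E L (Suc a)) (w U (larrow S M E L a) (S (Suc a)))"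
proof -
  define P0 where "P0 = ob (map S [0..<a])"
  have le: "a \<le> n" "a < Suc a" using assms by simp_all
  have okC: "crok (CSa a) (CLa a) a [0..<a]" using assms by (auto intro!: crokC)
  have oka: "crok S L a [0..<a]" "crok S L (Suc a) [0..<a]" "crok S L (Suc a) [a]" "crok S L (Suc a) [0..<Suc a]"
    using assms by (auto intro!: crok_orig)
  have tya: "Dom (cr S L a [0..<a]) = OT (S a) P0" "Cod (cr S L a [0..<a]) = OT P0 (S a)"
    "Dom (cr S L (Suc a) [0..<a]) = OT (S (Suc a)) P0" "Cod (cr S L (Suc a) [0..<a]) = OT P0 (S (Suc a))"
    using oka unfolding P0_def by simp_all
  have o1: "ob (map (CSa a) [0..<a]) = P0" unfolding P0_def by (simp add: ob_CS1)
  have tyC: "Dom (cr (CSa a) (CLa a) a [0..<a]) = OT (OT (S a) (S (Suc a))) P0"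
     "Cod (cr (CSa a) (CLa a) a [0..<a]) = OT P0 (OT (S a) (S (Suc a)))"
    using okC o1 by (simp_all add: CS_def)
  have crMw: "V (w U (cr (CSa a) (CLa a) a [0..<a]) (OT (S a) (S (Suc a)))) (V (w U (L a (Suc a)) (OT P0 (OT (S a) (S (Suc a))))) r) =
     V (w P0 (L a (Suc a)) (OT (S a) (S (Suc a)))) (V (w U (cr S L (Suc a) [0..<a]) (OT (S a) (OT (S a) (S (Suc a)))))
       (V (w (S (Suc a)) (cr S L a [0..<a]) (OT (S a) (S (Suc a)))) r))"
    if "Cod r = OT (S (Suc a)) (OT (S a) (OT P0 (OT (S a) (S (Suc a)))))" for r
  proof -
    have "w U (V (cr (CSa a) (CLa a) a [0..<a]) (w U (L a (Suc a)) P0)) (OT (S a) (S (Suc a))) = 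
      w U (V (w P0 (L a (Suc a)) U) (V (w U (cr S L (Suc a) [0..<a]) (S a)) (w (S (Suc a)) (cr S L a [0..<a]) U))) (OT (S a) (S (Suc a)))"
      using crM[of a "[0..<a]", OF assms] unfolding P0_def by (simp add: subset_eq)
    then have "V (w U (cr (CSa a) (CLa a) a [0..<a]) (OT (S a) (S (Suc a)))) (w U (L a (Suc a)) (OT P0 (OT (S a) (S (Suc a))))) =
     V (w P0 (L a (Suc a)) (OT (S a) (S (Suc a)))) (V (w U (cr S L (Suc a) [0..<a]) (OT (S a) (OT (S a) (S (Suc a)))))
       (w (S (Suc a)) (cr S L a [0..<a]) (OT (S a) (S (Suc a)))))"
      using assms tya tyC by (simp add: w_distr)
    note hh = this
    show ?thesis using that assms tya tyC by (simp add: tl2[OF hh])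
  qed
  have LOCw: "V (w P0 (H (M a) (M (Suc a))) U) (V (w (OT P0 (S a)) (L a (Suc a)) (S (Suc a))) (V (w P0 (L a (Suc a)) (OT (S a) (S (Suc a)))) r)) =
     V (w (OT P0 (S a)) (M (Suc a)) U) (V (w P0 (L a (Suc a)) (S (Suc a))) (V (w (OT P0 (S (Suc a))) (M a) (S (Suc a))) r))"
    if "Cod r = OT P0 (OT (S (Suc a)) (OT (S a) (OT (S a) (S (Suc a)))))" for r
  proof -
    have "w P0 (V (w (S a) (M (Suc a)) U) (V (w U (L a (Suc a)) (S (Suc a))) (w (S (Suc a)) (M a) (S (Suc a))))) U = 
      w P0 (V (H (M a) (M (Suc a))) (V (w (S a) (L a (Suc a)) (S (Suc a))) (w U (L a (Suc a)) (OT (S a) (S (Suc a)))))) U"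
      using LOC[of a "Suc a"] assms by simp
    then have "V (w P0 (H (M a) (M (Suc a))) U) (V (w (OT P0 (S a)) (L a (Suc a)) (S (Suc a))) (w P0 (L a (Suc a)) (OT (S a) (S (Suc a))))) =
     V (w (OT P0 (S a)) (M (Suc a)) U) (V (w P0 (L a (Suc a)) (S (Suc a))) (w (OT P0 (S (Suc a))) (M a) (S (Suc a))))"
      using assms le by (simp add: w_distr)
    note hh = this
    show ?thesis using that assms le by (simp add: tl3[OF hh])
  qed
  define X where "X = V (w (OT P0 (S a)) (M (Suc a)) U) (V (w P0 (L a (Suc a)) (S (Suc a))) (V (w (OT P0 (S (Suc a))) (M a) (S (Suc a)))
     (V (w U (cr S L (Suc a) [0..<a]) (OT (S a) (OT (S a) (S (Suc a))))) (V (w (S (Suc a)) (cr S L a [0..<a]) (OT (S a) (S (Suc a))))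
      (V (w U (E (Suc a)) (OT (S a) (OT P0 (OT (S a) (S (Suc a)))))) (w U (E a) (OT P0 (OT (S a) (S (Suc a))))))))))"
  have lhs: "larrow (CSa a) (CMa a) (CEa a) (CLa a) a = X"
    unfolding larrow_cr[OF okC] X_def using assms le tyC tya
    by (simp add: o1 CS_def CM_def CE_def w_distr wH[of "E (Suc a)" "E a"] crMw LOCw)
  have crb: "cr S L (Suc a) [0..<Suc a] = V (w P0 (L a (Suc a)) U) (w U (cr S L (Suc a) [0..<a]) (S a))"
    using cr_append[OF oka(2,3)] assms unfolding P0_def by simp
  have rhs: "V (larrow S M E L (Suc a)) (w U (larrow S M E L a) (S (Suc a))) = X"
    unfolding larrow_cr[OF oka(1)] larrow_cr[OF oka(4)] crb X_def using assms le tya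
    by (simp add: P0_def[symmetric] w_distr 
      wcgt[where A=U and f="E (Suc a)" and X=U and X'="S (Suc a)" and Z=P0 and g="M a" and Y="OT (S a) (S a)"
       and Y'="S a" and D="S (Suc a)", simplified]
      wcgt[where A=U and f="E (Suc a)" and X=U and X'="S (Suc a)" and Z=U and g="cr S L a [0..<a]" and Y="OT (S a) P0"
       and Y'="OT P0 (S a)" and D="OT (S a) (S (Suc a))", simplified]
      wcgt[where A=U and f="cr S L (Suc a) [0..<a]" and X="OT (S (Suc a)) P0" and X'="OT P0 (S (Suc a))" and Z=U and g="M a" 
       and Y="OT (S a) (S a)" and Y'="S a" and D="S (Suc a)", simplified])
  show ?thesis using lhs rhs by simp
qed
end

context wsys begin

lemma larrow1: "Suc 0 \<le> n \<Longrightarrow> larrow S M E L (Suc 0) = wb 0 (Suc 0)"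
proof -
  assume a: "Suc 0 \<le> n"
  have ok: "crok S L (Suc 0) [0..<Suc 0]" using a by (auto intro!: crok_orig)
  show ?thesis unfolding larrow_cr[OF ok] wb_eq using a by simp
qed

lemma wbar1: "Suc 0 \<le> n \<Longrightarrow> wbar S M E L (Suc 0) = wb 0 (Suc 0)"
proof -
  assume a: "Suc 0 \<le> n"
  have "wbar S M E L (Suc 0) = larrow S M E L (Suc 0)" using larrow_ty[of "Suc 0"] a by simp
  then show ?thesis using larrow1[OF a] by simp
qed

lemma main_ind: "2 \<le> m \<Longrightarrow> m \<le> n \<Longrightarrow> Suc a \<le> m \<Longrightarrow> 
  wbar S M E L m = wbar (CSa a) (CMa a) (CEa a) (CLa a) (m - 1)"
proof (induct m arbitrary: a rule: less_induct)
  case (less m)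
  then obtain p where mp: "m = Suc (Suc p)" by (metis add_2_eq_Suc le_Suc_ex)
  have orig: "wbar S M E L m = V (larrow S M E L (Suc (Suc p))) (w U (wbar S M E L (Suc p)) (S (Suc (Suc p))))"
    using mp by simp
  have Cside: "wbar (CSa a) (CMa a) (CEa a) (CLa a) (m - 1) = 
    V (larrow (CSa a) (CMa a) (CEa a) (CLa a) (Suc p)) (w U (wbar (CSa a) (CMa a) (CEa a) (CLa a) p) (CSa a (Suc p)))"
    using mp by simp
  show ?case
  proof (cases "a = Suc p")
    case True
    have bl: "larrow (CSa a) (CMa a) (CEa a) (CLa a) a = V (larrow S M E L (Suc a)) (w U (larrow S M E L a) (S (Suc a)))"
      by (rule Bl) (use less mp True in simp)
    have cg: "wbar (CSa a) (CMa a) (CEa a) (CLa a) p = wbar S M E L p"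
      by (rule wbar_cong) (use True in \<open>auto simp: CS_def CM_def CE_def CL_def\<close>)
    have t1: "Dom (wbar S M E L p) = ob (map S [0..<Suc p])" "Cod (wbar S M E L p) = ob (map S [0..<Suc p])"
      using wbar_ty[of p] less mp by simp_all
    have t2: "Dom (larrow S M E L (Suc p)) = ob (map S [0..<Suc (Suc p)])" "Cod (larrow S M E L (Suc p)) = ob (map S [0..<Suc (Suc p)])"
      "Dom (larrow S M E L (Suc (Suc p))) = ob (map S [0..<Suc (Suc (Suc p))])" "Cod (larrow S M E L (Suc (Suc p))) = ob (map S [0..<Suc (Suc (Suc p))])"
      using larrow_ty[of "Suc p"] larrow_ty[of "Suc (Suc p)"] less mp by simp_all
    show ?thesis unfolding orig Cside cg using bl True t1 t2 by (simp add: CS_def w_distr)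
  next
    case False
    then have ap: "a < Suc p" using less mp by simp
    have a1: "larrow (CSa a) (CMa a) (CEa a) (CLa a) (Suc p) = V (larrow S M E L (Suc (Suc p))) 
     (w (ob (map S [0..<a])) (wb a (Suc a)) (OT (ob (map S [Suc (Suc a)..<Suc (Suc p)])) (S (Suc (Suc p)))))"
      by (rule A1) (use ap less mp in simp_all)
    have t2: "Dom (larrow S M E L (Suc (Suc p))) = ob (map S [0..<Suc (Suc (Suc p))])" "Cod (larrow S M E L (Suc (Suc p))) = ob (map S [0..<Suc (Suc (Suc p))])"
      using larrow_ty[of "Suc (Suc p)"] less mp by simp_all
    have t1: "Dom (wbar S M E L (Suc p)) = ob (map S [0..<Suc (Suc p)])" "Cod (wbar S M E L (Suc p)) = ob (map S [0..<Suc (Suc p)])"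
      using wbar_ty[of "Suc p"] less mp by simp_all
    have sp2: "[0..<Suc (Suc p)] = [0..<a] @ a # Suc a # [Suc (Suc a)..<Suc (Suc p)]" by (rule upt_spl2) (use ap in simp)
    have a2: "V (w (ob (map S [0..<a])) (wb a (Suc a)) (ob (map S [Suc (Suc a)..<Suc (Suc p)]))) (wbar S M E L (Suc p)) = wbar S M E L (Suc p)"
      by (rule A2) (use ap less mp in simp_all)
    have d: "w U (V (w (ob (map S [0..<a])) (wb a (Suc a)) (ob (map S [Suc (Suc a)..<Suc (Suc p)]))) (wbar S M E L (Suc p))) (S (Suc (Suc p))) = 
        V (w (ob (map S [0..<a])) (wb a (Suc a)) (OT (ob (map S [Suc (Suc a)..<Suc (Suc p)])) (S (Suc (Suc p))))) (w U (wbar S M E L (Suc p)) (S (Suc (Suc p))))"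
      by (rule w_distr[THEN trans]) (use t1 sp2 ap less mp in \<open>simp_all del: upt_Suc\<close>)
    have fin: "V (V (larrow S M E L (Suc (Suc p))) (w (ob (map S [0..<a])) (wb a (Suc a)) (OT (ob (map S [Suc (Suc a)..<Suc (Suc p)])) (S (Suc (Suc p)))))) 
       (w U (wbar (CSa a) (CMa a) (CEa a) (CLa a) p) (CSa a (Suc p))) = V (larrow S M E L (Suc (Suc p))) (w U (wbar S M E L (Suc p)) (S (Suc (Suc p))))"
    proof (cases p)
      case 0
      then have a0: "a = 0" using ap by simp
      have "wbar S M E L (Suc 0) = wb 0 (Suc 0)" by (rule wbar1) (use less mp in simp)
      then show ?thesis using 0 a0 less mp t2 by (simp add: CS_def)
    next
      case (Suc q)
      then have wp: "wbar (CSa a) (CMa a) (CEa a) (CLa a) p = wbar S M E L (Suc p)" 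
        using less.hyps[of "Suc p" a] ap less mp by simp
      have "V (w (ob (map S [0..<a])) (wb a (Suc a)) (OT (ob (map S [Suc (Suc a)..<Suc (Suc p)])) (S (Suc (Suc p))))) 
         (w U (wbar S M E L (Suc p)) (S (Suc (Suc p)))) = w U (wbar S M E L (Suc p)) (S (Suc (Suc p)))"
        using d a2 by simp
      moreover have "V (V (larrow S M E L (Suc (Suc p))) (w (ob (map S [0..<a])) (wb a (Suc a)) (OT (ob (map S [Suc (Suc a)..<Suc (Suc p)])) (S (Suc (Suc p)))))) 
         (w U (wbar S M E L (Suc p)) (S (Suc (Suc p)))) = V (larrow S M E L (Suc (Suc p))) (V (w (ob (map S [0..<a])) (wb a (Suc a)) (OT (ob (map S [Suc (Suc a)..<Suc (Suc p)])) (S (Suc (Suc p))))) 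
         (w U (wbar S M E L (Suc p)) (S (Suc (Suc p)))))"
      proof (rule comp_assoc)
        have o3: "ob (map S [0..<Suc (Suc (Suc p))]) = OT (ob (map S [0..<Suc (Suc p)])) (S (Suc (Suc p)))" by simp
        show "Cod (w U (wbar S M E L (Suc p)) (S (Suc (Suc p)))) = Dom (w (ob (map S [0..<a])) (wb a (Suc a)) (OT (ob (map S [Suc (Suc a)..<Suc (Suc p)])) (S (Suc (Suc p)))))"
          "Cod (w (ob (map S [0..<a])) (wb a (Suc a)) (OT (ob (map S [Suc (Suc a)..<Suc (Suc p)])) (S (Suc (Suc p))))) = Dom (larrow S M E L (Suc (Suc p)))"
          using wbar_ty[of "Suc p"] larrow_ty[of "Suc (Suc p)"] o3 sp2 ap less mp by (simp_all del: upt_Suc)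
      qed
      ultimately show ?thesis unfolding wp using ap by (simp add: CS_def)
    qed
    show ?thesis unfolding orig Cside a1 fin[symmetric] using ap by (simp add: CS_def)
  qed
qed

end

theorem lemma2p7:
  fixes C :: "('o,'m) smcat" and n k :: nat
    and S :: "nat \<Rightarrow> 'o" and Sb M E :: "nat \<Rightarrow> 'm" and L :: "nat \<Rightarrow> nat \<Rightarrow> 'm"
  assumes "smc C"
    and "1 < n"
    and "smc_ops.wdl0 C n S Sb M E L"
    and "1 \<le> k" and "k \<le> n"
  shows "smc_ops.wbar C S M E L n =
         smc_ops.wbar C (smc_ops.CS C k S) (smc_ops.CM C k S M L) (smc_ops.CE C k E L)
                        (smc_ops.CL C k S M E L) (n - 1)"
proof -
  interpret wsys C n S Sb M E L using assms by (simp add: wsys_def wsys_axioms_def)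
  obtain a where k: "k = Suc a" using assms(4) by (cases k) auto
  show ?thesis unfolding k by (rule main_ind) (use assms k in simp_all)
qed


end
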